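(* Consider the following random bipartite graph $G$ on $L\cup R$ with $|L|=|R|=n$ (with $n$ divisible by $6$): $L=L_1\cup L_2$, $R=R_1\cup R_2$ with $|L_1|=|R_1|=n/6$ and $|L_2|=|R_2|=5n/6$; every vertex of $L$ is adjacent to every vertex of $R_1$, every vertex of $R$ is adjacent to every vertex of $L_1$, and in addition a uniformly random perfect matching $M$ between $L_2$ and $R_2$ is added; each vertex's adjacency list is a uniformly random permutation of its neighbors. Any deterministic algorithm that accesses $G$ via neighbor queries and pair queries (and knows all degrees and the partition $L_1,L_2,R_1,R_2$) requires $\Omega(n^2)$ queries in expectation to discover $n/3$ edges of $M$.
   Context: A neighbor query $Q_1(u,i)$ returns the $i$-th entry of $u$'s adjacency list; a pair query $Q_2(u,v)$ returns whether $(u,v)$ is an edge. An edge $(u,v)\in M$ is discovered once the answers to the queries made so far uniquely identify $(u,v)$ as an edge of $M$. *)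

theory Defs
  imports Complex_Main
begin

text \<open>Vertices: Inl i is the left vertex i, Inr j the right vertex j (0 <= i,j < n).
  L1 = Inl ` {0..<n div 6}, L2 = Inl ` {n div 6..<n}; R1, R2 analogously.
  The random matching M is a set of index pairs (i,j), meaning the edge (Inl i, Inr j).\<close>

type_synonym vert = "nat + nat"

definition is_vert :: "nat \<Rightarrow> vert \<Rightarrow> bool" where
  "is_vert n v = (case v of Inl i \<Rightarrow> i < n | Inr j \<Rightarrow> j < n)"

definition perfect_matching_L2R2 :: "nat \<Rightarrow> (nat \<times> nat) set \<Rightarrow> bool" where
  "perfect_matching_L2R2 n M \<longleftrightarrow>
     M \<subseteq> {n div 6..<n} \<times> {n div 6..<n} \<and>
     (\<forall>i\<in>{n div 6..<n}. \<exists>!j. (i, j) \<in> M) \<and>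
     (\<forall>j\<in>{n div 6..<n}. \<exists>!i. (i, j) \<in> M)"

definition lr_edge :: "nat \<Rightarrow> (nat \<times> nat) set \<Rightarrow> nat \<Rightarrow> nat \<Rightarrow> bool" where
  "lr_edge n M i j \<longleftrightarrow> i < n \<and> j < n \<and> (i < n div 6 \<or> j < n div 6 \<or> (i, j) \<in> M)"

fun is_edge :: "nat \<Rightarrow> (nat \<times> nat) set \<Rightarrow> vert \<Rightarrow> vert \<Rightarrow> bool" where
  "is_edge n M (Inl i) (Inr j) = lr_edge n M i j"
| "is_edge n M (Inr j) (Inl i) = lr_edge n M i j"
| "is_edge n M _ _ = False"

definition nbrs :: "nat \<Rightarrow> (nat \<times> nat) set \<Rightarrow> vert \<Rightarrow> vert set" where
  "nbrs n M u = {v. is_edge n M u v}"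

text \<open>The set of all valid inputs; the uniform distribution on it is exactly
  "M uniform, adjacency lists independent uniform permutations".\<close>
type_synonym input = "(nat \<times> nat) set \<times> (vert \<Rightarrow> vert list)"

definition inputs :: "nat \<Rightarrow> input set" where
  "inputs n = {(M, adj). perfect_matching_L2R2 n M \<and>
      (\<forall>v. if is_vert n v then distinct (adj v) \<and> set (adj v) = nbrs n M v
           else adj v = [])}"

datatype query = Q1 vert nat | Q2 vert vert
datatype answer = A1 "vert option" | A2 bool

fun answer_of :: "nat \<Rightarrow> input \<Rightarrow> query \<Rightarrow> answer" where
  "answer_of n (M, adj) (Q1 u i) = A1 (if i < length (adj u) then Some (adj u ! i) else None)"
| "answer_of n (M, adj) (Q2 u v) = A2 (is_edge n M u v)"

text \<open>A deterministic adaptive algorithm chooses its next query from the history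
  of queries and answers so far.\<close>
type_synonym algorithm = "(query \<times> answer) list \<Rightarrow> query"

fun history :: "nat \<Rightarrow> algorithm \<Rightarrow> input \<Rightarrow> nat \<Rightarrow> (query \<times> answer) list" where
  "history n alg x 0 = []"
| "history n alg x (Suc t) =
     (let h = history n alg x t; q = alg h in h @ [(q, answer_of n x q)])"

definition consistent :: "nat \<Rightarrow> (query \<times> answer) list \<Rightarrow> input \<Rightarrow> bool" where
  "consistent n h y \<longleftrightarrow> (\<forall>(q, a) \<in> set h. answer_of n y q = a)"

definition discovered :: "nat \<Rightarrow> algorithm \<Rightarrow> input \<Rightarrow> nat \<Rightarrow> (nat \<times> nat) set" where
  "discovered n alg x t =
     {e \<in> fst x. \<forall>y \<in> inputs n. consistent n (history n alg x t) y \<longrightarrow> e \<in> fst y}"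

definition succeeds_by :: "nat \<Rightarrow> algorithm \<Rightarrow> input \<Rightarrow> nat \<Rightarrow> bool" where
  "succeeds_by n alg x t \<longleftrightarrow> n div 3 \<le> card (discovered n alg x t)"

definition num_queries :: "nat \<Rightarrow> algorithm \<Rightarrow> input \<Rightarrow> nat" where
  "num_queries n alg x = (LEAST t. succeeds_by n alg x t)"

definition expected_queries :: "nat \<Rightarrow> algorithm \<Rightarrow> real" where
  "expected_queries n alg =
     (\<Sum>x\<in>inputs n. real (num_queries n alg x)) / real (card (inputs n))"

end

theory Submission
  imports Defs
begin

lemma history_length[simp]: "length (history n alg x t) = t"
  by (induction t) (auto simp: Let_def)

lemma history_prefix: "t \<le> t' \<Longrightarrow> set (history n alg x t) \<subseteq> set (history n alg x t')"
proof (induction t' )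
  case 0 then show ?case by simp
next
  case (Suc t') then show ?case by (cases "t = Suc t'") (auto simp: Let_def)
qed

lemma history_self: "(q,a) \<in> set (history n alg x t) \<Longrightarrow> answer_of n x q = a"
  by (induction t) (auto simp: Let_def)

lemma history_cons:
  "consistent n (history n alg x t) y \<Longrightarrow> history n alg y t = history n alg x t"
proof (induction t)
  case 0 then show ?case by simp
next
  case (Suc t)
  have "consistent n (history n alg x t) y" using Suc.prems by (auto simp: consistent_def Let_def)
  then have "history n alg y t = history n alg x t" using Suc.IH by simp
  moreover have "answer_of n y (alg (history n alg x t)) = answer_of n x (alg (history n alg x t))"
    using Suc.prems by (auto simp: consistent_def Let_def)
  ultimately show ?case by (simp add: Let_def)
qed

lemma history_Suc: "history n alg x (Suc t) = history n alg x t @ [(alg (history n alg x t), answer_of n x (alg (history n alg x t)))]"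
  by (simp add: Let_def)

definition Vs :: "nat \<Rightarrow> vert set" where "Vs n = Inl ` {..<n} \<union> Inr ` {..<n}"

lemma finite_Vs[simp]: "finite (Vs n)" by (simp add: Vs_def)

lemma is_vert_Vs: "is_vert n v \<longleftrightarrow> v \<in> Vs n"
  by (cases v) (auto simp: is_vert_def Vs_def)

lemma is_edge_Vs: "is_edge n M u v \<Longrightarrow> u \<in> Vs n \<and> v \<in> Vs n"
  by (cases u; cases v) (auto simp: lr_edge_def Vs_def)

lemma nbrs_sub: "nbrs n M u \<subseteq> Vs n"
  using is_edge_Vs by (auto simp: nbrs_def)

lemma finite_nbrs[simp]: "finite (nbrs n M u)"
  by (rule finite_subset[OF nbrs_sub finite_Vs])

lemma finite_inputs: "finite (inputs n)"
proof -
  let ?Ms = "Pow ({n div 6..<n} \<times> {n div 6..<n})"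
  let ?B = "{xs. set xs \<subseteq> Vs n \<and> distinct xs}"
  let ?F = "{f. \<forall>x. (x \<in> Vs n \<longrightarrow> f x \<in> ?B) \<and> (x \<notin> Vs n \<longrightarrow> f x = [])}"
  have fB: "finite ?B" by (rule finite_subset_distinct) simp
  have fF: "finite ?F" by (rule finite_set_of_finite_funs) (simp_all only: fB finite_Vs)
  have "inputs n \<subseteq> ?Ms \<times> ?F"
  proof (rule subsetI)
    fix x assume xi: "x \<in> inputs n"
    obtain M adj where xx: "x = (M,adj)" by force
    have pm: "perfect_matching_L2R2 n M" and
      I: "\<forall>v. if is_vert n v then distinct (adj v) \<and> set (adj v) = nbrs n M v else adj v = []"
      using xi xx by (simp_all add: inputs_def)
    have "M \<in> ?Ms" using pm by (simp add: perfect_matching_L2R2_def)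
    moreover have "adj \<in> ?F"
    proof -
      have a1: "adj v \<in> ?B" if "v \<in> Vs n" for v
      proof -
        have "is_vert n v" using that by (simp add: is_vert_Vs)
        then have "distinct (adj v) \<and> set (adj v) = nbrs n M v" using I by metis
        then show ?thesis using nbrs_sub[of n M v] by simp
      qed
      have a2: "adj v = []" if "v \<notin> Vs n" for v
      proof -
        have "\<not> is_vert n v" using that by (simp add: is_vert_Vs)
        then show ?thesis using I by metis
      qed
      show ?thesis using a1 a2 by blast
    qed
    ultimately show "x \<in> ?Ms \<times> ?F" using xx by simp
  qed
  moreover have "finite (?Ms \<times> ?F)" by (rule finite_cartesian_product) (simp_all only: fF finite_Pow_iff finite_SigmaI finite_atLeastLessThan)
  ultimately show ?thesis by (rule finite_subset)
qed

lemma inputs_nonempty: "inputs n \<noteq> {}"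
proof -
  define M0 where "M0 = {(a,a) | a. n div 6 \<le> a \<and> a < n}"
  define adj0 where "adj0 = (\<lambda>v. if is_vert n v then (SOME xs. set xs = nbrs n M0 v \<and> distinct xs) else [])"
  have pm: "perfect_matching_L2R2 n M0" by (auto simp: perfect_matching_L2R2_def M0_def)
  have "\<forall>v. if is_vert n v then distinct (adj0 v) \<and> set (adj0 v) = nbrs n M0 v else adj0 v = []"
  proof
    fix v
    have "\<exists>xs. set xs = nbrs n M0 v \<and> distinct xs" by (rule finite_distinct_list) simp
    then have "set (SOME xs. set xs = nbrs n M0 v \<and> distinct xs) = nbrs n M0 v \<and> distinct (SOME xs. set xs = nbrs n M0 v \<and> distinct xs)"
      by (rule someI_ex)
    then show "if is_vert n v then distinct (adj0 v) \<and> set (adj0 v) = nbrs n M0 v else adj0 v = []"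
      by (simp add: adj0_def)
  qed
  then have "(M0, adj0) \<in> inputs n" using pm by (simp add: inputs_def)
  then show ?thesis by blast
qed

lemma pm_range: "perfect_matching_L2R2 n M \<Longrightarrow> (a,b) \<in> M \<Longrightarrow> n div 6 \<le> a \<and> a < n \<and> n div 6 \<le> b \<and> b < n"
  by (auto simp: perfect_matching_L2R2_def)

lemma pm_row: "perfect_matching_L2R2 n M \<Longrightarrow> (a,b) \<in> M \<Longrightarrow> (a,b') \<in> M \<Longrightarrow> b = b'"
  unfolding perfect_matching_L2R2_def by (metis (no_types, lifting) SigmaD1 subsetD)

lemma pm_col: "perfect_matching_L2R2 n M \<Longrightarrow> (a,b) \<in> M \<Longrightarrow> (a',b) \<in> M \<Longrightarrow> a = a'"
  unfolding perfect_matching_L2R2_def by (metis (no_types, lifting) SigmaD2 subsetD)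

lemma pm_card: assumes "perfect_matching_L2R2 n M" shows "card M = n - n div 6"
proof -
  have "inj_on fst M" using pm_row[OF assms] by (auto simp: inj_on_def)
  moreover have "fst ` M = {n div 6..<n}"
  proof
    show "fst ` M \<subseteq> {n div 6..<n}" using pm_range[OF assms] by force
    show "{n div 6..<n} \<subseteq> fst ` M"
    proof
      fix i assume "i \<in> {n div 6..<n}"
      then obtain j where "(i,j) \<in> M" using assms unfolding perfect_matching_L2R2_def by blast
      then show "i \<in> fst ` M" by force
    qed
  qed
  ultimately show ?thesis by (metis card_atLeastLessThan card_image)
qed

lemma inputsD: "x \<in> inputs n \<Longrightarrow> perfect_matching_L2R2 n (fst x) \<and>
   (\<forall>v. if is_vert n v then distinct (snd x v) \<and> set (snd x v) = nbrs n (fst x) v else snd x v = [])"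
  by (auto simp: inputs_def)

lemma inputsD': "(M,adj) \<in> inputs n \<Longrightarrow> perfect_matching_L2R2 n M \<and>
   (\<forall>v. if is_vert n v then distinct (adj v) \<and> set (adj v) = nbrs n M v else adj v = [])"
  by (simp add: inputs_def)

lemma pm_finite: "perfect_matching_L2R2 n M \<Longrightarrow> finite M"
  unfolding perfect_matching_L2R2_def by (meson finite_SigmaI finite_atLeastLessThan finite_subset)

fun revq :: "nat \<Rightarrow> query \<times> answer \<Rightarrow> (nat \<times> nat) set" where
  "revq n (Q1 (Inl i) p, A1 (Some (Inr j))) = (if n div 6 \<le> i \<and> n div 6 \<le> j then {(i,j)} else {})"
| "revq n (Q1 (Inr j) p, A1 (Some (Inl i))) = (if n div 6 \<le> i \<and> n div 6 \<le> j then {(i,j)} else {})"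
| "revq n (Q2 (Inl i) (Inr j), A2 True) = (if n div 6 \<le> i \<and> n div 6 \<le> j then {(i,j)} else {})"
| "revq n (Q2 (Inr j) (Inl i), A2 True) = (if n div 6 \<le> i \<and> n div 6 \<le> j then {(i,j)} else {})"
| "revq n _ = {}"

definition R :: "nat \<Rightarrow> (query \<times> answer) list \<Rightarrow> (nat \<times> nat) set" where
  "R n h = \<Union> (revq n ` set h)"

lemma revq_A2: "e \<in> revq n (Q2 u v, A2 b) \<Longrightarrow> b \<and> e \<in> revq n (Q2 u v, A2 True)"
  by (cases b) simp_all

lemma revq_le1: "\<exists>e. revq n qa \<subseteq> {e}"
  by (induction n qa rule: revq.induct) auto

lemma finite_revq[simp]: "finite (revq n qa)"
  using revq_le1 finite_subset by (metis finite.emptyI finite.insertI)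

lemma finite_R[simp]: "finite (R n h)" by (simp add: R_def)

lemma R_snoc[simp]: "R n (h @ [qa]) = R n h \<union> revq n qa" by (auto simp: R_def)

lemma revq_cases: "e \<in> revq n (q,a) \<Longrightarrow> (\<exists>p. q = Q1 (Inl (fst e)) p) \<or> (\<exists>p. q = Q1 (Inr (snd e)) p)
   \<or> q = Q2 (Inl (fst e)) (Inr (snd e)) \<or> q = Q2 (Inr (snd e)) (Inl (fst e))"
  by (induction n "(q,a)" rule: revq.induct) (auto split: if_splits)

lemma revq_sub: assumes "x \<in> inputs n" shows "revq n (q, answer_of n x q) \<subseteq> fst x"
proof
  fix e assume e: "e \<in> revq n (q, answer_of n x q)"
  obtain M adj where x: "x = (M,adj)" by force
  have I: "\<forall>v. if is_vert n v then distinct (adj v) \<and> set (adj v) = nbrs n M v else adj v = []"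
    using inputsD'[of M adj n] assms unfolding x by blast
  have nb: "u \<in> set (adj v) \<Longrightarrow> is_edge n M v u" for u v
    using I[rule_format, of v] by (auto simp: nbrs_def split: if_splits)
  show "e \<in> fst x"
  proof (cases q)
    case (Q1 v p)
    have pl: "p < length (adj v)" using e x Q1 by (auto split: if_splits)
    define w where "w = adj v ! p"
    have ew: "e \<in> revq n (Q1 v p, A1 (Some w))" using e x Q1 pl by (simp add: w_def)
    have "w \<in> set (adj v)" using pl by (simp add: w_def)
    then have ed: "is_edge n M v w" by (rule nb)
    show ?thesis using ew ed x
      by (cases v; cases w) (auto simp: lr_edge_def split: if_splits)
  next
    case (Q2 u v)
    then have "e \<in> revq n (Q2 u v, A2 (is_edge n M u v))" using e x by simp
    then have "is_edge n M u v \<and> e \<in> revq n (Q2 u v, A2 True)" by (rule revq_A2)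
    then show ?thesis using x
      by (cases u; cases v) (auto simp: lr_edge_def split: if_splits)
  qed
qed

lemma R_sub: "x \<in> inputs n \<Longrightarrow> \<forall>(q,a)\<in>set h. answer_of n x q = a \<Longrightarrow> R n h \<subseteq> fst x"
  using revq_sub unfolding R_def by fastforce

definition isQ1 :: "vert \<Rightarrow> query \<Rightarrow> bool" where
  "isQ1 w q = (case q of Q1 v p \<Rightarrow> v = w | _ \<Rightarrow> False)"
definition inv2 :: "vert \<Rightarrow> query \<Rightarrow> bool" where
  "inv2 w q = (case q of Q2 u v \<Rightarrow> u = w \<or> v = w | _ \<Rightarrow> False)"
definition cnt1 :: "(query \<times> answer) list \<Rightarrow> vert \<Rightarrow> nat" where
  "cnt1 h w = length (filter (\<lambda>qa. isQ1 w (fst qa)) h)"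
definition cnt2 :: "(query \<times> answer) list \<Rightarrow> vert \<Rightarrow> nat" where
  "cnt2 h w = length (filter (\<lambda>qa. inv2 w (fst qa)) h)"

lemma cnt1_snoc: "cnt1 (h @ [qa]) w \<ge> cnt1 h w" by (simp add: cnt1_def)
lemma cnt2_snoc: "cnt2 (h @ [qa]) w \<ge> cnt2 h w" by (simp add: cnt2_def)

lemma sum_cnt1: "(\<Sum>w\<in>W. cnt1 h w) \<le> length h"
proof (cases "finite W")
  case True
  then show ?thesis
  proof (induction h)
    case Nil then show ?case by (simp add: cnt1_def)
  next
    case (Cons qa h)
    have pw: "cnt1 (qa#h) w = of_bool (isQ1 w (fst qa)) + cnt1 h w" for w by (simp add: cnt1_def)
    have "(\<Sum>w\<in>W. cnt1 (qa#h) w) = (\<Sum>w\<in>W. of_bool (isQ1 w (fst qa)) + cnt1 h w)" by (simp only: pw)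
    also have "\<dots> = (\<Sum>w\<in>W. of_bool (isQ1 w (fst qa))) + (\<Sum>w\<in>W. cnt1 h w)" by (rule sum.distrib)
    also have "(\<Sum>w\<in>W. of_bool (isQ1 w (fst qa))) = card (W \<inter> {w. isQ1 w (fst qa)})"
      using Cons.prems by simp
    also have "card (W \<inter> {w. isQ1 w (fst qa)}) \<le> 1"
    proof (cases "fst qa")
      case (Q1 v p)
      then have sub: "W \<inter> {w. isQ1 w (fst qa)} \<subseteq> {v}" by (auto simp: isQ1_def)
      show ?thesis using card_mono[OF _ sub] by simp
    next
      case (Q2 u v)
      then show ?thesis by (simp add: isQ1_def)
    qed
    finally show ?case using Cons by simp
  qed
qed simp

lemma sum_cnt2: "(\<Sum>w\<in>W. cnt2 h w) \<le> 2 * length h"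
proof (cases "finite W")
  case True
  then show ?thesis
  proof (induction h)
    case Nil then show ?case by (simp add: cnt2_def)
  next
    case (Cons qa h)
    have pw: "cnt2 (qa#h) w = of_bool (inv2 w (fst qa)) + cnt2 h w" for w by (simp add: cnt2_def)
    have "(\<Sum>w\<in>W. cnt2 (qa#h) w) = (\<Sum>w\<in>W. of_bool (inv2 w (fst qa)) + cnt2 h w)" by (simp only: pw)
    also have "\<dots> = (\<Sum>w\<in>W. of_bool (inv2 w (fst qa))) + (\<Sum>w\<in>W. cnt2 h w)" by (rule sum.distrib)
    also have "(\<Sum>w\<in>W. of_bool (inv2 w (fst qa))) = card (W \<inter> {w. inv2 w (fst qa)})"
      using Cons.prems by simp
    also have "card (W \<inter> {w. inv2 w (fst qa)}) \<le> 2"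
    proof (cases "fst qa")
      case (Q2 u v)
      then have "W \<inter> {w. inv2 w (fst qa)} \<subseteq> {u,v}" by (auto simp: inv2_def)
      moreover have "card {u,v} \<le> 2" by (simp add: card_insert_if)
      ultimately show ?thesis using card_mono[of "{u,v}"] by (meson finite.emptyI finite.insertI le_trans)
    next
      case (Q1 v p)
      then show ?thesis by (simp add: inv2_def)
    qed
    finally show ?case using Cons by simp
  qed
qed simp

definition swv :: "nat \<Rightarrow> nat \<Rightarrow> nat \<Rightarrow> nat \<Rightarrow> vert \<Rightarrow> vert" where
  "swv i j i' j' v = (case v of Inl a \<Rightarrow> Inl (if a = i then i' else if a = i' then i else a)
                              | Inr b \<Rightarrow> Inr (if b = j then j' else if b = j' then j else b))"
definition swM :: "(nat \<times> nat) set \<Rightarrow> nat \<Rightarrow> nat \<Rightarrow> nat \<Rightarrow> nat \<Rightarrow> (nat \<times> nat) set" where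
  "swM M i j i' j' = (M - {(i,j),(i',j')}) \<union> {(i,j'),(i',j)}"
definition swA :: "(vert \<Rightarrow> vert list) \<Rightarrow> nat \<Rightarrow> nat \<Rightarrow> nat \<Rightarrow> nat \<Rightarrow> vert \<Rightarrow> vert list" where
  "swA adj i j i' j' = (\<lambda>v. if v \<in> {Inl i, Inl i', Inr j, Inr j'} then map (swv i j i' j') (adj v) else adj v)"
definition swx :: "nat \<Rightarrow> nat \<Rightarrow> nat \<Rightarrow> nat \<Rightarrow> input \<Rightarrow> input" where
  "swx i j i' j' x = (swM (fst x) i j i' j', swA (snd x) i j i' j')"

definition nobad :: "(query \<times> answer) list \<Rightarrow> nat \<Rightarrow> nat \<Rightarrow> nat \<Rightarrow> nat \<Rightarrow> bool" where
  "nobad h i j i' j' = (\<forall>qa \<in> set h. fst qa \<notin> {Q2 (Inl i) (Inr j'), Q2 (Inr j') (Inl i), Q2 (Inl i') (Inr j), Q2 (Inr j) (Inl i')})"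

lemma pm_ex: assumes "perfect_matching_L2R2 n M" "a \<in> {n div 6..<n}" shows "\<exists>b. (a,b) \<in> M"
proof -
  have "\<forall>i\<in>{n div 6..<n}. \<exists>!j. (i, j) \<in> M" using assms(1) unfolding perfect_matching_L2R2_def by (rule conjunct1[OF conjunct2])
  then have "\<exists>!j. (a, j) \<in> M" using assms(2) by (rule bspec)
  then show ?thesis by (rule ex1_implies_ex)
qed

lemma pm_ex_col: assumes "perfect_matching_L2R2 n M" "b \<in> {n div 6..<n}" shows "\<exists>a. (a,b) \<in> M"
proof -
  have "\<forall>j\<in>{n div 6..<n}. \<exists>!i. (i, j) \<in> M" using assms(1) unfolding perfect_matching_L2R2_def by (rule conjunct2[OF conjunct2])
  then have "\<exists>!i. (i, b) \<in> M" using assms(2) by (rule bspec)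
  then show ?thesis by (rule ex1_implies_ex)
qed

lemma swA_in: "v \<in> {Inl i, Inl i', Inr j, Inr j'} \<Longrightarrow> swA adj i j i' j' v = map (swv i j i' j') (adj v)"
  unfolding swA_def by (rule if_P)
lemma swA_out: "v \<notin> {Inl i, Inl i', Inr j, Inr j'} \<Longrightarrow> swA adj i j i' j' v = adj v"
  unfolding swA_def by (rule if_not_P)

lemma swv_swv[simp]: "swv i j i' j' (swv i j i' j' v) = v"
  by (cases v) (auto simp: swv_def)

lemma swv_inj: "inj (swv i j i' j')"
  by (metis injI swv_swv)

locale swsetup =
  fixes n M adj i j i' j'
  assumes inp: "(M,adj) \<in> inputs n"
    and e1: "(i,j) \<in> M" and e2: "(i',j') \<in> M" and ne: "i \<noteq> i'"
begin

lemma pm: "perfect_matching_L2R2 n M" using inputsD'[OF inp] by blast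
lemma jne: "j \<noteq> j'" using pm_col[OF pm e1] e2 ne by blast
lemma rng: "n div 6 \<le> i \<and> i < n \<and> n div 6 \<le> j \<and> j < n \<and> n div 6 \<le> i' \<and> i' < n \<and> n div 6 \<le> j' \<and> j' < n"
  using pm_range[OF pm e1] pm_range[OF pm e2] by blast
lemma rowM: "(a,b) \<in> M \<Longrightarrow> a = i \<Longrightarrow> b = j" "(a,b) \<in> M \<Longrightarrow> a = i' \<Longrightarrow> b = j'"
   "(a,b) \<in> M \<Longrightarrow> b = j \<Longrightarrow> a = i" "(a,b) \<in> M \<Longrightarrow> b = j' \<Longrightarrow> a = i'"
  using pm_row[OF pm] pm_col[OF pm] e1 e2 by blast+

lemma memM': "(a,b) \<in> swM M i j i' j' \<longleftrightarrow> ((a,b) \<in> M \<and> a \<noteq> i \<and> a \<noteq> i') \<or> (a = i \<and> b = j') \<or> (a = i' \<and> b = j)"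
  using rowM ne jne by (auto simp: swM_def)

lemma pm': "perfect_matching_L2R2 n (swM M i j i' j')"
proof -
  have sub: "swM M i j i' j' \<subseteq> {n div 6..<n} \<times> {n div 6..<n}"
    using rng pm_range[OF pm] by (force simp: memM')
  have row: "\<exists>!b. (a,b) \<in> swM M i j i' j'" if "a \<in> {n div 6..<n}" for a
  proof (cases "a = i \<or> a = i'")
    case True
    show ?thesis
    proof (cases "a = i")
      case True
      show ?thesis unfolding True
      proof (rule ex1I[of _ j'])
        show "(i,j') \<in> swM M i j i' j'" by (simp add: swM_def)
        fix b assume "(i,b) \<in> swM M i j i' j'"
        then show "b = j'" using memM'[of i b] ne by blast
      qed
    next
      case False
      have ai: "a = i'" using \<open>a = i \<or> a = i'\<close> False by simp
      show ?thesis unfolding ai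
      proof (rule ex1I[of _ j])
        show "(i',j) \<in> swM M i j i' j'" by (simp add: swM_def)
        fix b assume "(i',b) \<in> swM M i j i' j'"
        then show "b = j" using memM'[of i' b] ne by blast
      qed
    qed
  next
    case False
    obtain b where b: "(a,b) \<in> M" using pm_ex[OF pm \<open>a \<in> {n div 6..<n}\<close>] by blast
    show ?thesis
    proof (rule ex1I[of _ b])
      show "(a,b) \<in> swM M i j i' j'" using b False by (simp add: memM')
      fix b' assume "(a,b') \<in> swM M i j i' j'"
      then have "(a,b') \<in> M" using False by (simp add: memM')
      then show "b' = b" using pm_row[OF pm b] by simp
    qed
  qed
  have col: "\<exists>!a. (a,b) \<in> swM M i j i' j'" if "b \<in> {n div 6..<n}" for b
  proof (cases "b = j \<or> b = j'")
    case True
    show ?thesis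
    proof (cases "b = j")
      case True
      show ?thesis
      proof (rule ex1I[of _ i'])
        show "(i',b) \<in> swM M i j i' j'" using True by (simp add: memM')
        fix a assume "(a,b) \<in> swM M i j i' j'"
        then show "a = i'" using True jne rowM(3)[of a b] by (auto simp: memM')
      qed
    next
      case False
      then have bj: "b = j'" using \<open>b = j \<or> b = j'\<close> by simp
      show ?thesis
      proof (rule ex1I[of _ i])
        show "(i,b) \<in> swM M i j i' j'" using bj by (simp add: memM')
        fix a assume "(a,b) \<in> swM M i j i' j'"
        then show "a = i" using bj jne rowM(4)[of a b] by (auto simp: memM')
      qed
    qed
  next
    case False
    obtain a where a: "(a,b) \<in> M" using pm_ex_col[OF pm \<open>b \<in> {n div 6..<n}\<close>] by blast
    then have ai: "a \<noteq> i \<and> a \<noteq> i'" using False rowM(1,2) by blast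
    show ?thesis
    proof (rule ex1I[of _ a])
      show "(a,b) \<in> swM M i j i' j'" using a ai by (simp add: memM')
      fix a' assume "(a',b) \<in> swM M i j i' j'"
      then have "(a',b) \<in> M" using False by (auto simp: memM')
      then show "a' = a" using pm_col[OF pm _ a] by simp
    qed
  qed
  show ?thesis using sub row col by (simp add: perfect_matching_L2R2_def)
qed

lemma lr_same: "\<not> ((a = i \<or> a = i') \<and> (b = j \<or> b = j')) \<Longrightarrow> lr_edge n (swM M i j i' j') a b = lr_edge n M a b"
  using rowM by (auto simp: lr_edge_def memM')

lemma mi: "(i,b) \<in> swM M i j i' j' \<longleftrightarrow> b = j'" using memM'[of i b] ne by blast
lemma mi': "(i',b) \<in> swM M i j i' j' \<longleftrightarrow> b = j" using memM'[of i' b] ne by blast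
lemma mj: "(a,j) \<in> swM M i j i' j' \<longleftrightarrow> a = i'" using memM'[of a j] jne rowM(3)[of a j] by blast
lemma mj': "(a,j') \<in> swM M i j i' j' \<longleftrightarrow> a = i" using memM'[of a j'] jne rowM(4)[of a j'] by blast
lemma Mi: "(i,b) \<in> M \<longleftrightarrow> b = j" using rowM(1)[of i b] e1 by blast
lemma Mi': "(i',b) \<in> M \<longleftrightarrow> b = j'" using rowM(2)[of i' b] e2 by blast
lemma Mj: "(a,j) \<in> M \<longleftrightarrow> a = i" using rowM(3)[of a j] e1 by blast
lemma Mj': "(a,j') \<in> M \<longleftrightarrow> a = i'" using rowM(4)[of a j'] e2 by blast

lemma lr_sw1: "a = i \<or> a = i' \<Longrightarrow> lr_edge n (swM M i j i' j') a b = lr_edge n M a (if b = j then j' else if b = j' then j else b)"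
  using rng ne jne by (auto simp: lr_edge_def mi mi' Mi Mi')

lemma lr_sw2: "b = j \<or> b = j' \<Longrightarrow> lr_edge n (swM M i j i' j') a b = lr_edge n M (if a = i then i' else if a = i' then i else a) b"
  using rng ne jne by (auto simp: lr_edge_def mj mj' Mj Mj')

lemma edge': "is_edge n (swM M i j i' j') v u =
   is_edge n M v (if v \<in> {Inl i, Inl i', Inr j, Inr j'} then swv i j i' j' u else u)"
proof (cases v)
  case (Inl a)
  show ?thesis
  proof (cases u)
    case (Inl c) then show ?thesis using \<open>v = Inl a\<close> by (simp add: swv_def)
  next
    case (Inr b)
    show ?thesis
    proof (cases "a = i \<or> a = i'")
      case False then show ?thesis using Inl Inr lr_same by auto
    next
      case True
      then show ?thesis using Inl Inr lr_sw1[OF True, of b] by (simp add: swv_def)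
    qed
  qed
next
  case (Inr b)
  show ?thesis
  proof (cases u)
    case (Inr c) then show ?thesis using \<open>v = Inr b\<close> by (simp add: swv_def)
  next
    case (Inl a)
    show ?thesis
    proof (cases "b = j \<or> b = j'")
      case False then show ?thesis using Inl Inr lr_same by auto
    next
      case True
      then show ?thesis using Inl Inr lr_sw2[OF True, of a] by (simp add: swv_def)
    qed
  qed
qed

lemma inputs': "swx i j i' j' (M,adj) \<in> inputs n"
proof -
  have I: "\<forall>v. if is_vert n v then distinct (adj v) \<and> set (adj v) = nbrs n M v else adj v = []"
    using inputsD'[OF inp] by blast
  have four: "is_vert n v" if "v \<in> {Inl i, Inl i', Inr j, Inr j'}" for v
    using that rng by (auto simp: is_vert_def)
  have "if is_vert n v then distinct (swA adj i j i' j' v) \<and> set (swA adj i j i' j' v) = nbrs n (swM M i j i' j') v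
        else swA adj i j i' j' v = []" for v
  proof (cases "v \<in> {Inl i, Inl i', Inr j, Inr j'}")
    case True
    have d: "distinct (adj v)" and s: "set (adj v) = nbrs n M v" using I[rule_format, of v] four[OF True] by auto
    have "set (swA adj i j i' j' v) = nbrs n (swM M i j i' j') v"
    proof -
      have "set (swA adj i j i' j' v) = swv i j i' j' ` nbrs n M v" unfolding swA_in[OF True] set_map s ..
      also have "\<dots> = nbrs n (swM M i j i' j') v"
      proof -
        have eT: "is_edge n (swM M i j i' j') v u = is_edge n M v (swv i j i' j' u)" for u
          using edge'[of v u] unfolding if_P[OF True] .
        have "u \<in> nbrs n (swM M i j i' j') v \<longleftrightarrow> u \<in> swv i j i' j' ` nbrs n M v" for u
        proof
          assume "u \<in> nbrs n (swM M i j i' j') v"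
          then have "swv i j i' j' u \<in> nbrs n M v" using eT[of u] by (simp add: nbrs_def)
          then show "u \<in> swv i j i' j' ` nbrs n M v" by (metis image_eqI swv_swv)
        next
          assume "u \<in> swv i j i' j' ` nbrs n M v"
          then obtain w where w: "u = swv i j i' j' w" "w \<in> nbrs n M v" by blast
          then show "u \<in> nbrs n (swM M i j i' j') v" using eT[of u] by (simp add: nbrs_def)
        qed
        then show ?thesis by blast
      qed
      finally show ?thesis .
    qed
    moreover have "distinct (swA adj i j i' j' v)"
      unfolding swA_in[OF True] distinct_map using d swv_inj by (simp add: inj_on_def inj_def)
    ultimately show ?thesis using four[OF True] by simp
  next
    case False
    have eF: "is_edge n (swM M i j i' j') v u = is_edge n M v u" for u
      using edge'[of v u] unfolding if_not_P[OF False] .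
    have "nbrs n (swM M i j i' j') v = nbrs n M v" unfolding nbrs_def eF ..
    then show ?thesis using I[rule_format, of v] by (simp add: swA_out[OF False])
  qed
  then show ?thesis using pm' by (simp add: inputs_def swx_def)
qed

lemma notin': "(i,j) \<notin> swM M i j i' j'" using ne jne by (simp add: memM')
lemma in': "(i,j') \<in> swM M i j i' j'" "(i',j) \<in> swM M i j i' j'" by (simp_all add: memM')

lemma invol: "swx i j' i' j (swx i j i' j' (M,adj)) = (M,adj)"
proof -
  have "swM (swM M i j i' j') i j' i' j = M"
    using e1 e2 ne jne by (auto simp: swM_def Mi Mi')
  moreover have sv: "swv i j' i' j = swv i j i' j'" by (auto simp: swv_def fun_eq_iff split: sum.splits)
  moreover have "swA (swA adj i j i' j') i j' i' j v = adj v" for v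
  proof (cases "v \<in> {Inl i, Inl i', Inr j, Inr j'}")
    case True
    then have T2: "v \<in> {Inl i, Inl i', Inr j', Inr j}" by auto
    show ?thesis unfolding swA_in[OF T2] swA_in[OF True] sv by (simp add: comp_def)
  next
    case False
    then have F2: "v \<notin> {Inl i, Inl i', Inr j', Inr j}" by auto
    show ?thesis unfolding swA_out[OF F2] swA_out[OF False] ..
  qed
  ultimately show ?thesis by (simp add: swx_def fun_eq_iff)
qed

lemma consistent':
  assumes h: "\<forall>(q,a)\<in>set h. answer_of n (M,adj) q = a"
    and r1: "(i,j) \<notin> R n h" and r2: "(i',j') \<notin> R n h" and nb: "nobad h i j i' j'"
  shows "\<forall>(q,a)\<in>set h. answer_of n (swx i j i' j' (M,adj)) q = a"
proof (clarify)
  fix q a assume qa: "(q,a) \<in> set h"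
  then have a: "a = answer_of n (M,adj) q" using h by auto
  have revR: "revq n (q,a) \<subseteq> R n h" using qa by (auto simp: R_def)
  have I: "\<forall>v. if is_vert n v then distinct (adj v) \<and> set (adj v) = nbrs n M v else adj v = []"
    using inputsD'[OF inp] by blast
  show "answer_of n (swx i j i' j' (M,adj)) q = a"
  proof (cases q)
    case (Q1 v p)
    show ?thesis
    proof (cases "v \<in> {Inl i, Inl i', Inr j, Inr j'} \<and> p < length (adj v)")
      case False
      show ?thesis
      proof (cases "v \<in> {Inl i, Inl i', Inr j, Inr j'}")
        case True
        then have "\<not> p < length (adj v)" using False by blast
        then show ?thesis using a Q1 by (simp add: swx_def swA_in[OF True])
      next
        case F: False
        then show ?thesis using a Q1 by (simp add: swx_def swA_out[OF F])
      qed
    next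
      case True
      define w where "w = adj v ! p"
      have T1: "v \<in> {Inl i, Inl i', Inr j, Inr j'}" and pl: "p < length (adj v)" using True by blast+
      have vv: "is_vert n v" using T1 rng by (auto simp: is_vert_def)
      have "set (adj v) = nbrs n M v" using I[rule_format, of v] vv by simp
      moreover have "w \<in> set (adj v)" using pl by (simp add: w_def)
      ultimately have "w \<in> nbrs n M v" by simp
      then have ed: "is_edge n M v w" by (simp add: nbrs_def)
      have rv: "revq n (Q1 v p, A1 (Some w)) \<subseteq> R n h" using revR a Q1 pl by (simp add: w_def)
      have "swv i j i' j' w = w"
      proof (rule ccontr)
        assume nw: "swv i j i' j' w \<noteq> w"
        show False
        proof (cases w)
          case (Inl c)
          then have c: "c = i \<or> c = i'" using nw by (auto simp: swv_def split: if_splits)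
          then have "v = Inr j \<or> v = Inr j'" using T1 ed Inl by auto
          then show False using c ed Inl rv r1 r2 rng ne jne
            by (auto simp: lr_edge_def Mi Mi')
        next
          case (Inr c)
          then have c: "c = j \<or> c = j'" using nw by (auto simp: swv_def split: if_splits)
          then have "v = Inl i \<or> v = Inl i'" using T1 ed Inr by auto
          then show False using c ed Inr rv r1 r2 rng ne jne
            by (auto simp: lr_edge_def Mi Mi')
        qed
      qed
      then show ?thesis using a Q1 pl by (simp add: swx_def swA_in[OF T1] w_def)
    qed
  next
    case (Q2 u v)
    have nq: "q \<notin> {Q2 (Inl i) (Inr j'), Q2 (Inr j') (Inl i), Q2 (Inl i') (Inr j), Q2 (Inr j) (Inl i')}"
      using nb qa unfolding nobad_def by force
    have "is_edge n (swM M i j i' j') u v = is_edge n M u v"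
    proof (cases u; cases v)
      fix a b assume uv: "u = Inl a" "v = Inr b"
      show ?thesis
      proof (cases "(a = i \<or> a = i') \<and> (b = j \<or> b = j')")
        case False then show ?thesis using uv lr_same by simp
      next
        case True
        then show ?thesis using uv nq Q2 revR a r1 r2 rng e1 e2 ne jne
          by (auto simp: lr_edge_def mi mi' Mi Mi')
      qed
    next
      fix a b assume uv: "u = Inr b" "v = Inl a"
      show ?thesis
      proof (cases "(a = i \<or> a = i') \<and> (b = j \<or> b = j')")
        case False then show ?thesis using uv lr_same by simp
      next
        case True
        then show ?thesis using uv nq Q2 revR a r1 r2 rng e1 e2 ne jne
          by (auto simp: lr_edge_def mi mi' Mi Mi')
      qed
    qed auto
    then show ?thesis using a Q2 by (simp add: swx_def)
  qed
qed

end

definition pswap :: "(vert \<Rightarrow> vert list) \<Rightarrow> vert \<Rightarrow> nat \<Rightarrow> nat \<Rightarrow> vert \<Rightarrow> vert list" where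
  "pswap adj v p p' = adj(v := (adj v)[p := adj v ! p', p' := adj v ! p])"

lemma list_swap_swap: "p < length xs \<Longrightarrow> p' < length xs \<Longrightarrow>
  (xs[p := xs ! p', p' := xs ! p])[p := (xs[p := xs ! p', p' := xs ! p]) ! p', p' := (xs[p := xs ! p', p' := xs ! p]) ! p] = xs"
  by (rule nth_equalityI) (auto simp: nth_list_update)

lemma pswap_invol: "p < length (adj v) \<Longrightarrow> p' < length (adj v) \<Longrightarrow> pswap (pswap adj v p p') v p p' = adj"
  using list_swap_swap[of p "adj v" p'] by (simp add: pswap_def fun_eq_iff)

lemma pswap_nth: "p < length (adj v) \<Longrightarrow> p' < length (adj v) \<Longrightarrow> pswap adj v p p' v ! p' = adj v ! p"
  by (simp add: pswap_def nth_list_update)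

lemma pswap_inputs: assumes "(M,adj) \<in> inputs n" "p < length (adj v)" "p' < length (adj v)"
  shows "(M, pswap adj v p p') \<in> inputs n"
proof -
  have I: "\<forall>v. if is_vert n v then distinct (adj v) \<and> set (adj v) = nbrs n M v else adj v = []"
    "perfect_matching_L2R2 n M" using assms(1) by (auto simp: inputs_def)
  have vv: "is_vert n v" using I(1)[rule_format, of v] assms(2) by (auto split: if_splits)
  have "if is_vert n u then distinct (pswap adj v p p' u) \<and> set (pswap adj v p p' u) = nbrs n M u else pswap adj v p p' u = []" for u
  proof (cases "u = v")
    case True
    have "distinct (adj v) \<and> set (adj v) = nbrs n M v" using I(1)[rule_format, of v] vv by simp
    then show ?thesis using True vv assms(2,3) by (simp add: pswap_def)
  next
    case False
    then show ?thesis using I(1)[rule_format, of u] by (simp add: pswap_def)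
  qed
  then show ?thesis using I(2) by (simp add: inputs_def)
qed

lemma pswap_cons: assumes "\<forall>(q,a)\<in>set h. answer_of n (M,adj) q = a"
  "\<forall>qa\<in>set h. fst qa \<noteq> Q1 v p \<and> fst qa \<noteq> Q1 v p'" "p < length (adj v)" "p' < length (adj v)"
  shows "\<forall>(q,a)\<in>set h. answer_of n (M, pswap adj v p p') q = a"
proof clarify
  fix q a assume qa: "(q,a) \<in> set h"
  then have a: "a = answer_of n (M,adj) q" using assms(1) by auto
  show "answer_of n (M, pswap adj v p p') q = a"
  proof (cases q)
    case (Q1 u r)
    have "u = v \<Longrightarrow> r \<noteq> p \<and> r \<noteq> p'" using assms(2) qa Q1 by force
    then show ?thesis using a Q1 assms(3,4) by (auto simp: pswap_def nth_list_update)
  next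
    case (Q2 u w) then show ?thesis using a by simp
  qed
qed

lemma sigma_count:
  assumes "finite B" "finite A" "\<forall>x\<in>A. d \<le> card (W x)" "inj_on f (Sigma A W)" "f ` Sigma A W \<subseteq> B"
  shows "card A * d \<le> card B"
proof (cases "d = 0")
  case True then show ?thesis by simp
next
  case False
  then have fW: "\<forall>x\<in>A. finite (W x)" using assms(3) by (metis card.infinite le_zero_eq)
  have "card A * d = (\<Sum>x\<in>A. d)" by simp
  also have "\<dots> \<le> (\<Sum>x\<in>A. card (W x))" using assms(3) by (intro sum_mono) auto
  also have "\<dots> = card (Sigma A W)" using assms(2) fW by (simp add: card_SigmaI)
  also have "\<dots> = card (f ` Sigma A W)" using assms(4) by (simp add: card_image)
  also have "\<dots> \<le> card B" using assms(1,5) by (simp add: card_mono)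
  finally show ?thesis .
qed

lemma card_filter_fst: "card {q \<in> fst ` set h. P q} \<le> length (filter (\<lambda>qa. P (fst qa)) h)"
proof -
  have "{q \<in> fst ` set h. P q} = fst ` set (filter (\<lambda>qa. P (fst qa)) h)" by auto
  then show ?thesis by (metis card_image_le card_length finite_set le_trans)
qed

definition idx :: "vert \<Rightarrow> nat" where "idx v = (case v of Inl c \<Rightarrow> c | Inr c \<Rightarrow> c)"
definition othidx :: "vert \<Rightarrow> query \<Rightarrow> nat" where
  "othidx w q = (case q of Q2 a b \<Rightarrow> idx (if a = w then b else a) | _ \<Rightarrow> 0)"

definition Wset :: "nat \<Rightarrow> (query \<times> answer) list \<Rightarrow> (nat \<times> nat) set \<Rightarrow> nat \<Rightarrow> nat \<Rightarrow> (nat \<times> nat) set" where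
  "Wset n h M i j = {e \<in> M. fst e \<noteq> i \<and> e \<notin> R n h \<and> nobad h i j (fst e) (snd e)}"

lemma Wset_card:
  assumes pm: "perfect_matching_L2R2 n M" and ij: "(i,j) \<in> M"
  shows "card M \<le> card (Wset n h M i j) + 1 + card (R n h) + cnt2 h (Inl i) + cnt2 h (Inr j)"
proof -
  let ?Qs = "fst ` set h"
  define B1 where "B1 = {e\<in>M. Q2 (Inl i) (Inr (snd e)) \<in> ?Qs \<or> Q2 (Inr (snd e)) (Inl i) \<in> ?Qs}"
  define B2 where "B2 = {e\<in>M. Q2 (Inl (fst e)) (Inr j) \<in> ?Qs \<or> Q2 (Inr j) (Inl (fst e)) \<in> ?Qs}"
  have fM: "finite M" using pm_finite[OF pm] .
  have sub: "M \<subseteq> Wset n h M i j \<union> {(i,j)} \<union> R n h \<union> B1 \<union> B2"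
  proof
    fix e assume e: "e \<in> M"
    show "e \<in> Wset n h M i j \<union> {(i,j)} \<union> R n h \<union> B1 \<union> B2"
    proof (cases "fst e = i")
      case True then have "e = (i,j)" using pm_row[OF pm, of i j "snd e"] ij e by (metis prod.collapse)
      then show ?thesis by simp
    next
      case False
      then show ?thesis using e unfolding Wset_def nobad_def B1_def B2_def by force
    qed
  qed
  have c1: "card B1 \<le> cnt2 h (Inl i)"
  proof -
    have "inj_on snd B1" using pm_col[OF pm] by (auto simp: inj_on_def B1_def)
    then have cB: "card B1 = card (snd ` B1)" by (simp add: card_image)
    have sub: "snd ` B1 \<subseteq> othidx (Inl i) ` {q \<in> ?Qs. inv2 (Inl i) q}"
    proof
      fix b assume "b \<in> snd ` B1"
      then obtain e where e: "e \<in> B1" "b = snd e" by auto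
      then have "Q2 (Inl i) (Inr b) \<in> ?Qs \<or> Q2 (Inr b) (Inl i) \<in> ?Qs" by (auto simp: B1_def)
      then show "b \<in> othidx (Inl i) ` {q \<in> ?Qs. inv2 (Inl i) q}"
      proof
        assume "Q2 (Inl i) (Inr b) \<in> ?Qs"
        then show ?thesis by (intro image_eqI[of _ _ "Q2 (Inl i) (Inr b)"]) (auto simp: othidx_def idx_def inv2_def)
      next
        assume "Q2 (Inr b) (Inl i) \<in> ?Qs"
        then show ?thesis by (intro image_eqI[of _ _ "Q2 (Inr b) (Inl i)"]) (auto simp: othidx_def idx_def inv2_def)
      qed
    qed
    have "card (snd ` B1) \<le> card (othidx (Inl i) ` {q \<in> ?Qs. inv2 (Inl i) q})"
      by (rule card_mono[OF _ sub]) simp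
    also have "\<dots> \<le> card {q \<in> ?Qs. inv2 (Inl i) q}" by (rule card_image_le) simp
    also have "\<dots> \<le> cnt2 h (Inl i)" unfolding cnt2_def by (rule card_filter_fst)
    finally show ?thesis using cB by simp
  qed
  have c2: "card B2 \<le> cnt2 h (Inr j)"
  proof -
    have "inj_on fst B2" using pm_row[OF pm] by (auto simp: inj_on_def B2_def)
    then have cB: "card B2 = card (fst ` B2)" by (simp add: card_image)
    have sub: "fst ` B2 \<subseteq> othidx (Inr j) ` {q \<in> ?Qs. inv2 (Inr j) q}"
    proof
      fix b assume "b \<in> fst ` B2"
      then obtain e where e: "e \<in> B2" "b = fst e" by auto
      then have "Q2 (Inl b) (Inr j) \<in> ?Qs \<or> Q2 (Inr j) (Inl b) \<in> ?Qs" by (auto simp: B2_def)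
      then show "b \<in> othidx (Inr j) ` {q \<in> ?Qs. inv2 (Inr j) q}"
      proof
        assume "Q2 (Inl b) (Inr j) \<in> ?Qs"
        then show ?thesis by (intro image_eqI[of _ _ "Q2 (Inl b) (Inr j)"]) (auto simp: othidx_def idx_def inv2_def)
      next
        assume "Q2 (Inr j) (Inl b) \<in> ?Qs"
        then show ?thesis by (intro image_eqI[of _ _ "Q2 (Inr j) (Inl b)"]) (auto simp: othidx_def idx_def inv2_def)
      qed
    qed
    have "card (fst ` B2) \<le> card (othidx (Inr j) ` {q \<in> ?Qs. inv2 (Inr j) q})"
      by (rule card_mono[OF _ sub]) simp
    also have "\<dots> \<le> card {q \<in> ?Qs. inv2 (Inr j) q}" by (rule card_image_le) simp
    also have "\<dots> \<le> cnt2 h (Inr j)" unfolding cnt2_def by (rule card_filter_fst)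
    finally show ?thesis using cB by simp
  qed
  have fB: "finite (Wset n h M i j)" "finite B1" "finite B2" using fM by (auto simp: Wset_def B1_def B2_def)
  have "card M \<le> card (Wset n h M i j \<union> {(i,j)} \<union> R n h \<union> B1 \<union> B2)"
    using sub fB by (intro card_mono) auto
  also have "\<dots> \<le> card (Wset n h M i j) + card {(i,j)} + card (R n h) + card B1 + card B2"
    using card_Un_le[of "Wset n h M i j \<union> {(i,j)} \<union> R n h \<union> B1" B2]
      card_Un_le[of "Wset n h M i j \<union> {(i,j)} \<union> R n h" B1]
      card_Un_le[of "Wset n h M i j \<union> {(i,j)}" "R n h"]
      card_Un_le[of "Wset n h M i j" "{(i,j)}"] by linarith
  finally show ?thesis using c1 c2 by simp
qed

definition hh :: "nat \<Rightarrow> algorithm \<Rightarrow> input \<Rightarrow> nat \<Rightarrow> (query \<times> answer) list" where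
  "hh n alg x s = history n alg x s"
definition qq :: "nat \<Rightarrow> algorithm \<Rightarrow> input \<Rightarrow> nat \<Rightarrow> query" where
  "qq n alg x s = alg (history n alg x s)"
definition newhit :: "nat \<Rightarrow> algorithm \<Rightarrow> input \<Rightarrow> nat \<Rightarrow> bool" where
  "newhit n alg x s = (\<not> revq n (qq n alg x s, answer_of n x (qq n alg x s)) \<subseteq> R n (hh n alg x s))"
definition cheap1 :: "nat \<Rightarrow> algorithm \<Rightarrow> input \<Rightarrow> nat \<Rightarrow> bool" where
  "cheap1 n alg x s = (newhit n alg x s \<and> (\<exists>v p. qq n alg x s = Q1 v p \<and> 2 * cnt1 (hh n alg x s) v \<le> n div 6))"
definition cheap2 :: "nat \<Rightarrow> algorithm \<Rightarrow> input \<Rightarrow> nat \<Rightarrow> bool" where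
  "cheap2 n alg x s = (newhit n alg x s \<and> (\<exists>u w. qq n alg x s = Q2 u w \<and>
      cnt2 (hh n alg x s) u + cnt2 (hh n alg x s) w \<le> n div 6 \<and> card (R n (hh n alg x s)) \<le> n div 6))"

lemma hh_self: "\<forall>(q,a)\<in>set (hh n alg x s). answer_of n x q = a"
  using history_self unfolding hh_def by blast

lemma hh_same: "\<forall>(q,a)\<in>set (hh n alg x s). answer_of n y q = a \<Longrightarrow> hh n alg y s = hh n alg x s"
  using history_cons unfolding hh_def consistent_def by blast

lemma newhit_old: assumes "newhit n alg x s" "(qq n alg x s, a) \<in> set (hh n alg x s)" shows False
proof -
  have "a = answer_of n x (qq n alg x s)" using hh_self assms(2) by fastforce
  then show False using assms unfolding newhit_def R_def by blast
qed

lemma newhit_Q1: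
  assumes x: "x \<in> inputs n" and nh: "newhit n alg x s" and q: "qq n alg x s = Q1 v p"
  shows "p < length (snd x v) \<and> (\<forall>qa\<in>set (hh n alg x s). fst qa \<noteq> Q1 v p) \<and>
    (\<exists>e\<in>fst x. (v = Inl (fst e) \<and> snd x v ! p = Inr (snd e)) \<or> (v = Inr (snd e) \<and> snd x v ! p = Inl (fst e)))"
proof -
  obtain e where e: "e \<in> revq n (Q1 v p, answer_of n x (Q1 v p))"
    using nh q unfolding newhit_def by auto
  have eM: "e \<in> fst x" using revq_sub[OF x] e by blast
  obtain M adj where xx: "x = (M,adj)" by force
  have pl: "p < length (adj v)" using e xx by (auto split: if_splits)
  have "(v = Inl (fst e) \<and> adj v ! p = Inr (snd e)) \<or> (v = Inr (snd e) \<and> adj v ! p = Inl (fst e))"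
    using e xx pl by (cases v; cases "adj v ! p") (auto split: if_splits)
  moreover have "\<forall>qa\<in>set (hh n alg x s). fst qa \<noteq> Q1 v p"
    using newhit_old[OF nh] q by (metis prod.collapse)
  ultimately show ?thesis using eM xx pl by auto
qed

lemma newhit_Q2:
  assumes x: "x \<in> inputs n" and nh: "newhit n alg x s" and q: "qq n alg x s = Q2 u w"
  shows "\<exists>i j. (i,j) \<in> fst x \<and> (i,j) \<notin> R n (hh n alg x s) \<and> ((u = Inl i \<and> w = Inr j) \<or> (u = Inr j \<and> w = Inl i))"
proof -
  obtain e where e: "e \<in> revq n (Q2 u w, answer_of n x (Q2 u w))" "e \<notin> R n (hh n alg x s)"
    using nh q unfolding newhit_def by auto
  have eM: "e \<in> fst x" using revq_sub[OF x] e by blast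
  have "(u = Inl (fst e) \<and> w = Inr (snd e)) \<or> (u = Inr (snd e) \<and> w = Inl (fst e))"
    using revq_cases[OF e(1)] by auto
  then show ?thesis using eM e(2) by (metis prod.collapse)
qed

lemma deg_lower: assumes x: "x \<in> inputs n" and e: "(i,j) \<in> fst x"
  shows "n div 6 + 1 \<le> length (snd x (Inl i)) \<and> n div 6 + 1 \<le> length (snd x (Inr j))"
proof -
  have pm: "perfect_matching_L2R2 n (fst x)" using inputsD[OF x] by simp
  have r: "n div 6 \<le> i \<and> i < n \<and> n div 6 \<le> j \<and> j < n" using pm_range[OF pm e] .
  have I: "\<And>v. is_vert n v \<Longrightarrow> distinct (snd x v) \<and> set (snd x v) = nbrs n (fst x) v"
    using inputsD[OF x] by metis
  have len: "\<And>v. is_vert n v \<Longrightarrow> length (snd x v) = card (nbrs n (fst x) v)"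
    using I distinct_card by metis
  have s1: "insert (Inr j) (Inr ` {..<n div 6}) \<subseteq> nbrs n (fst x) (Inl i)"
    using r e by (auto simp: nbrs_def lr_edge_def)
  have s2: "insert (Inl i) (Inl ` {..<n div 6}) \<subseteq> nbrs n (fst x) (Inr j)"
    using r e by (auto simp: nbrs_def lr_edge_def)
  have c1: "card (insert (Inr j) (Inr ` {..<n div 6})) = n div 6 + 1"
    using r by (subst card_insert_disjoint) (auto simp: card_image)
  have c2: "card (insert (Inl i) (Inl ` {..<n div 6})) = n div 6 + 1"
    using r by (subst card_insert_disjoint) (auto simp: card_image)
  have v1: "is_vert n (Inl i)" "is_vert n (Inr j)" using r by (auto simp: is_vert_def)
  have "n div 6 + 1 \<le> length (snd x (Inl i))" using len[OF v1(1)] card_mono[OF finite_nbrs s1] unfolding c1 by simp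
  moreover have "n div 6 + 1 \<le> length (snd x (Inr j))" using len[OF v1(2)] card_mono[OF finite_nbrs s2] unfolding c2 by simp
  ultimately show ?thesis by blast
qed

lemma partner_eq:
  assumes x1: "x1 \<in> inputs n" and x2: "x2 \<in> inputs n" and M: "fst x1 = fst x2"
    and e1: "e1 \<in> fst x1" "(v = Inl (fst e1) \<and> snd x1 v ! p = Inr (snd e1)) \<or> (v = Inr (snd e1) \<and> snd x1 v ! p = Inl (fst e1))"
    and e2: "e2 \<in> fst x2" "(v = Inl (fst e2) \<and> snd x2 v ! p = Inr (snd e2)) \<or> (v = Inr (snd e2) \<and> snd x2 v ! p = Inl (fst e2))"
  shows "snd x1 v ! p = snd x2 v ! p"
proof -
  have pm: "perfect_matching_L2R2 n (fst x1)" using inputsD[OF x1] by simp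
  show ?thesis
  proof (cases v)
    case (Inl a)
    then have "fst e1 = a" "fst e2 = a" "snd x1 v ! p = Inr (snd e1)" "snd x2 v ! p = Inr (snd e2)" using e1(2) e2(2) by auto
    moreover have "snd e1 = snd e2" using pm_row[OF pm, of a "snd e1" "snd e2"] e1(1) e2(1) M calculation
      by (metis prod.collapse)
    ultimately show ?thesis by simp
  next
    case (Inr b)
    then have "snd e1 = b" "snd e2 = b" "snd x1 v ! p = Inl (fst e1)" "snd x2 v ! p = Inl (fst e2)" using e1(2) e2(2) by auto
    moreover have "fst e1 = fst e2" using pm_col[OF pm, of "fst e1" b "fst e2"] e1(1) e2(1) M calculation
      by (metis prod.collapse)
    ultimately show ?thesis by simp
  qed
qed

definition qpos :: "query \<Rightarrow> nat" where "qpos q = (case q of Q1 _ r \<Rightarrow> r | _ \<Rightarrow> 0)"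

lemma step1: "card {x \<in> inputs n. cheap1 n alg x s} * (n div 6) \<le> 2 * card (inputs n)"
proof -
  let ?k = "n div 6"
  define A where "A = {x \<in> inputs n. cheap1 n alg x s}"
  define W where "W x = (case qq n alg x s of Q1 v p \<Rightarrow> {p'. p' < length (snd x v) \<and> p' \<noteq> p \<and>
      (\<forall>qa\<in>set (hh n alg x s). fst qa \<noteq> Q1 v p')} | _ \<Rightarrow> {})" for x
  define f where "f = (\<lambda>(x,p'). case qq n alg x s of Q1 v p \<Rightarrow> (fst x, pswap (snd x) v p p') | _ \<Rightarrow> x)"
  have info: "\<exists>v p. qq n alg x s = Q1 v p \<and> 2 * cnt1 (hh n alg x s) v \<le> ?k \<and> p < length (snd x v) \<and>
      (\<forall>qa\<in>set (hh n alg x s). fst qa \<noteq> Q1 v p) \<and>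
      (\<exists>e\<in>fst x. (v = Inl (fst e) \<and> snd x v ! p = Inr (snd e)) \<or> (v = Inr (snd e) \<and> snd x v ! p = Inl (fst e)))"
    if "x \<in> A" for x
  proof -
    have xi: "x \<in> inputs n" and c: "cheap1 n alg x s" using that by (auto simp: A_def)
    obtain v p where q: "qq n alg x s = Q1 v p" "2 * cnt1 (hh n alg x s) v \<le> ?k" "newhit n alg x s"
      using c by (auto simp: cheap1_def)
    show ?thesis using newhit_Q1[OF xi q(3) q(1)] q by blast
  qed
  have Wc: "?k - ?k div 2 \<le> card (W x)" if xA: "x \<in> A" for x
  proof -
    obtain v p where q: "qq n alg x s = Q1 v p" "2 * cnt1 (hh n alg x s) v \<le> ?k" "p < length (snd x v)"
      "\<forall>qa\<in>set (hh n alg x s). fst qa \<noteq> Q1 v p"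
      and e: "\<exists>e\<in>fst x. (v = Inl (fst e) \<and> snd x v ! p = Inr (snd e)) \<or> (v = Inr (snd e) \<and> snd x v ! p = Inl (fst e))"
      using info[OF xA] by blast
    have xi: "x \<in> inputs n" using xA by (simp add: A_def)
    have len: "?k + 1 \<le> length (snd x v)"
      using e deg_lower[OF xi] by (metis prod.collapse)
    define P where "P = {p'. Q1 v p' \<in> fst ` set (hh n alg x s)}"
    have Psub: "P \<subseteq> qpos ` {q \<in> fst ` set (hh n alg x s). isQ1 v q}"
    proof
      fix r assume "r \<in> P"
      then show "r \<in> qpos ` {q \<in> fst ` set (hh n alg x s). isQ1 v q}"
        unfolding P_def by (intro image_eqI[of _ _ "Q1 v r"]) (auto simp: qpos_def isQ1_def)
    qed
    have fQ: "finite {q \<in> fst ` set (hh n alg x s). isQ1 v q}" by simp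
    have fP: "finite P" by (rule finite_subset[OF Psub finite_imageI[OF fQ]])
    have "card P \<le> card (qpos ` {q \<in> fst ` set (hh n alg x s). isQ1 v q})"
      by (rule card_mono[OF finite_imageI[OF fQ] Psub])
    also have "\<dots> \<le> card {q \<in> fst ` set (hh n alg x s). isQ1 v q}" by (rule card_image_le[OF fQ])
    also have "\<dots> \<le> cnt1 (hh n alg x s) v" unfolding cnt1_def by (rule card_filter_fst)
    finally have cP: "card P \<le> cnt1 (hh n alg x s) v" .
    have Wx: "W x = {p'. p' < length (snd x v) \<and> p' \<noteq> p \<and> (\<forall>qa\<in>set (hh n alg x s). fst qa \<noteq> Q1 v p')}"
      using q(1) by (simp add: W_def)
    have sub: "{..<length (snd x v)} \<subseteq> W x \<union> {p} \<union> P"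
      unfolding Wx P_def by force
    have fW: "finite (W x)" unfolding Wx by simp
    have "length (snd x v) \<le> card (W x \<union> {p} \<union> P)"
      using card_mono[OF _ sub] fW fP by simp
    also have "\<dots> \<le> card (W x) + 1 + card P"
      using card_Un_le[of "W x \<union> {p}" P] card_Un_le[of "W x" "{p}"] by simp
    finally show ?thesis using len cP q(2) by linarith
  qed
  have fsig: "f (x,p') = (fst x, pswap (snd x) v p p')" if "qq n alg x s = Q1 v p" for x p' v p
    using that by (simp add: f_def)
  have img: "f (x,p') \<in> inputs n \<and> (\<forall>(q,a)\<in>set (hh n alg x s). answer_of n (f (x,p')) q = a)" if xp: "(x,p') \<in> Sigma A W" for x p'
  proof -
    have xA: "x \<in> A" and pW: "p' \<in> W x" using xp by auto
    obtain v p where q: "qq n alg x s = Q1 v p" "p < length (snd x v)"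
      "\<forall>qa\<in>set (hh n alg x s). fst qa \<noteq> Q1 v p" using info[OF xA] by blast
    have pW': "p' < length (snd x v)" "\<forall>qa\<in>set (hh n alg x s). fst qa \<noteq> Q1 v p'" using pW q(1) by (auto simp: W_def)
    have xi: "(fst x, snd x) \<in> inputs n" using xA by (simp add: A_def)
    have "(fst x, pswap (snd x) v p p') \<in> inputs n" by (rule pswap_inputs[of "fst x" "snd x" n p v p', OF xi q(2) pW'(1)])
    moreover have "\<forall>(q,a)\<in>set (hh n alg x s). answer_of n (fst x, pswap (snd x) v p p') q = a"
      by (rule pswap_cons) (use hh_self[of n alg x s] q(3) pW' q(2) in auto)
    ultimately show ?thesis using fsig[OF q(1)] by simp
  qed
  have inj: "inj_on f (Sigma A W)"
  proof (rule inj_onI)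
    fix a b assume a: "a \<in> Sigma A W" and b: "b \<in> Sigma A W" and fe: "f a = f b"
    obtain x1 p1 where a': "a = (x1,p1)" by (rule prod.exhaust)
    obtain x2 p2 where b': "b = (x2,p2)" by (rule prod.exhaust)
    have x1A: "x1 \<in> A" and x2A: "x2 \<in> A" using a b a' b' by auto
    have h1: "hh n alg (f a) s = hh n alg x1 s" using img[of x1 p1] a a' by (auto intro!: hh_same)
    have h2: "hh n alg (f b) s = hh n alg x2 s" using img[of x2 p2] b b' by (auto intro!: hh_same)
    have hsame: "hh n alg x1 s = hh n alg x2 s" using h1 h2 fe by simp
    then have qsame: "qq n alg x1 s = qq n alg x2 s" by (simp add: qq_def hh_def)
    obtain v p where q1: "qq n alg x1 s = Q1 v p" "p < length (snd x1 v)"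
      and e1: "\<exists>e\<in>fst x1. (v = Inl (fst e) \<and> snd x1 v ! p = Inr (snd e)) \<or> (v = Inr (snd e) \<and> snd x1 v ! p = Inl (fst e))"
      using info[OF x1A] by blast
    have q2: "qq n alg x2 s = Q1 v p" using q1 qsame by simp
    obtain v' p' where q2': "qq n alg x2 s = Q1 v' p'" "p' < length (snd x2 v')"
      and e2: "\<exists>e\<in>fst x2. (v' = Inl (fst e) \<and> snd x2 v' ! p' = Inr (snd e)) \<or> (v' = Inr (snd e) \<and> snd x2 v' ! p' = Inl (fst e))"
      using info[OF x2A] by blast
    have vv: "v' = v" "p' = p" using q2 q2' by auto
    have fa: "f a = (fst x1, pswap (snd x1) v p p1)" using fsig[OF q1(1)] a' by simp
    have fb: "f b = (fst x2, pswap (snd x2) v p p2)" using fsig[OF q2] b' by simp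
    have M: "fst x1 = fst x2" using fa fb fe by simp
    have xi1: "x1 \<in> inputs n" and xi2: "x2 \<in> inputs n" using x1A x2A by (auto simp: A_def)
    have pe: "snd x1 v ! p = snd x2 v ! p"
      using e1 e2 vv partner_eq[OF xi1 xi2 M] by metis
    have p1l: "p1 < length (snd x1 v)" and p2l: "p2 < length (snd x2 v)"
      using a a' b' b q1(1) q2 by (auto simp: W_def)
    have p2l': "p < length (snd x2 v)" using q2' vv by simp
    have ad: "pswap (snd x1) v p p1 = pswap (snd x2) v p p2" using fa fb fe by simp
    have lensame: "length (snd x1 v) = length (snd x2 v)"
      using arg_cong[OF ad, of "\<lambda>g. length (g v)"] by (simp add: pswap_def)
    have "f a \<in> inputs n" using img[of x1 p1] a a' by auto
    then have dis: "distinct (snd (f a) v)"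
      using inputsD[of "f a" n] p1l fa by (metis (no_types, lifting) gr_implies_not0 length_list_update list.size(3) pswap_def snd_conv fun_upd_same)
    have n1: "snd (f a) v ! p1 = snd x1 v ! p" using pswap_nth[of p "snd x1" v p1, OF q1(2) p1l] fa by simp
    have n2: "snd (f a) v ! p2 = snd x2 v ! p" using pswap_nth[of p "snd x2" v p2, OF p2l' p2l] fb fe by simp
    have la: "length (snd (f a) v) = length (snd x1 v)" using fa by (simp add: pswap_def)
    have "p1 = p2" using dis n1 n2 pe p1l p2l lensame la nth_eq_iff_index_eq by metis
    moreover have "snd x1 = snd x2"
      using pswap_invol[of p "snd x1" v p1, OF q1(2) p1l] pswap_invol[of p "snd x2" v p2, OF p2l' p2l] ad calculation by metis
    ultimately show "a = b" using a' b' M by (simp add: prod_eq_iff)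
  qed
  have "card A * (?k - ?k div 2) \<le> card (inputs n)"
  proof (rule sigma_count[OF finite_inputs])
    show "finite A" using finite_inputs by (simp add: A_def)
    show "\<forall>x\<in>A. ?k - ?k div 2 \<le> card (W x)" using Wc by blast
    show "inj_on f (Sigma A W)" by (rule inj)
    show "f ` Sigma A W \<subseteq> inputs n" using img by auto
  qed
  note c1 = this
  have "card A * ?k \<le> card A * (2 * (?k - ?k div 2))" by (intro mult_le_mono2) linarith
  also have "\<dots> = 2 * (card A * (?k - ?k div 2))" by simp
  also have "\<dots> \<le> 2 * card (inputs n)" using c1 by simp
  finally show ?thesis by (simp add: A_def)
qed

definition ij :: "query \<Rightarrow> nat \<times> nat" where
  "ij q = (case q of Q2 (Inl i) (Inr j) \<Rightarrow> (i,j) | Q2 (Inr j) (Inl i) \<Rightarrow> (i,j) | _ \<Rightarrow> (0,0))"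

lemma step2: "card {x \<in> inputs n. cheap2 n alg x s} * (n div 6) \<le> card (inputs n)"
proof (cases "n div 6 = 0")
  case True then show ?thesis by simp
next
  case False
  let ?k = "n div 6"
  define A where "A = {x \<in> inputs n. cheap2 n alg x s}"
  define W where "W x = Wset n (hh n alg x s) (fst x) (fst (ij (qq n alg x s))) (snd (ij (qq n alg x s)))" for x
  define f where "f = (\<lambda>(x,e). swx (fst (ij (qq n alg x s))) (snd (ij (qq n alg x s))) (fst e) (snd e) x)"
  have info: "\<exists>i j. ij (qq n alg x s) = (i,j) \<and> (i,j) \<in> fst x \<and> (i,j) \<notin> R n (hh n alg x s) \<and>
      cnt2 (hh n alg x s) (Inl i) + cnt2 (hh n alg x s) (Inr j) \<le> ?k \<and> card (R n (hh n alg x s)) \<le> ?k"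
    if "x \<in> A" for x
  proof -
    have xi: "x \<in> inputs n" and c: "cheap2 n alg x s" using that by (auto simp: A_def)
    obtain u w where q: "qq n alg x s = Q2 u w" "cnt2 (hh n alg x s) u + cnt2 (hh n alg x s) w \<le> ?k"
      "card (R n (hh n alg x s)) \<le> ?k" "newhit n alg x s"
      using c by (auto simp: cheap2_def)
    obtain i j where ij: "(i,j) \<in> fst x" "(i,j) \<notin> R n (hh n alg x s)" "(u = Inl i \<and> w = Inr j) \<or> (u = Inr j \<and> w = Inl i)"
      using newhit_Q2[OF xi q(4) q(1)] by blast
    have "ij (qq n alg x s) = (i,j)" using ij(3) q(1) by (auto simp: ij_def)
    moreover have "cnt2 (hh n alg x s) (Inl i) + cnt2 (hh n alg x s) (Inr j) \<le> ?k" using ij(3) q(2) by auto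
    ultimately show ?thesis using ij q(3) by blast
  qed
  have Wc: "?k \<le> card (W x)" if xA: "x \<in> A" for x
  proof -
    obtain i j where q: "ij (qq n alg x s) = (i,j)" "(i,j) \<in> fst x" "(i,j) \<notin> R n (hh n alg x s)"
      "cnt2 (hh n alg x s) (Inl i) + cnt2 (hh n alg x s) (Inr j) \<le> ?k" "card (R n (hh n alg x s)) \<le> ?k"
      using info[OF xA] by blast
    have xi: "x \<in> inputs n" using xA by (simp add: A_def)
    have pm: "perfect_matching_L2R2 n (fst x)" using inputsD[OF xi] by simp
    have cM: "card (fst x) = n - ?k" by (rule pm_card[OF pm])
    have "card (fst x) \<le> card (W x) + 1 + card (R n (hh n alg x s)) + cnt2 (hh n alg x s) (Inl i) + cnt2 (hh n alg x s) (Inr j)"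
      using Wset_card[OF pm q(2)] q(1) by (simp add: W_def)
    moreover have "5 * ?k \<le> n - ?k" by linarith
    ultimately show ?thesis using cM q(4,5) False by linarith
  qed
  have info2: "\<exists>i j. ij (qq n alg x s) = (i,j) \<and> (i,j) \<in> fst x \<and> (i,j) \<notin> R n (hh n alg x s) \<and>
     e \<in> fst x \<and> fst e \<noteq> i \<and> e \<notin> R n (hh n alg x s) \<and> nobad (hh n alg x s) i j (fst e) (snd e) \<and>
     swsetup n (fst x) (snd x) i j (fst e) (snd e) \<and>
     f (x,e) = swx i j (fst e) (snd e) (fst x, snd x)" if xe: "(x,e) \<in> Sigma A W" for x e
  proof -
    have xA: "x \<in> A" and eW: "e \<in> W x" using xe by auto
    obtain i j where q: "ij (qq n alg x s) = (i,j)" "(i,j) \<in> fst x" "(i,j) \<notin> R n (hh n alg x s)"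
      using info[OF xA] by blast
    have ee: "e \<in> fst x" "fst e \<noteq> i" "e \<notin> R n (hh n alg x s)" "nobad (hh n alg x s) i j (fst e) (snd e)"
      using eW q(1) by (auto simp: W_def Wset_def)
    have xi: "(fst x, snd x) \<in> inputs n" using xA by (simp add: A_def)
    have "swsetup n (fst x) (snd x) i j (fst e) (snd e)"
      using xi q(2) ee(1,2) by (simp add: swsetup_def)
    moreover have "f (x,e) = swx i j (fst e) (snd e) (fst x, snd x)" using q(1) by (simp add: f_def)
    ultimately show ?thesis using q ee by blast
  qed
  have img: "f (x,e) \<in> inputs n \<and> (\<forall>(q,a)\<in>set (hh n alg x s). answer_of n (f (x,e)) q = a)"
    if xe: "(x,e) \<in> Sigma A W" for x e
  proof -
    obtain i j where q: "(i,j) \<notin> R n (hh n alg x s)"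
      "e \<notin> R n (hh n alg x s)" "nobad (hh n alg x s) i j (fst e) (snd e)"
      "swsetup n (fst x) (snd x) i j (fst e) (snd e)" "f (x,e) = swx i j (fst e) (snd e) (fst x, snd x)"
      using info2[OF xe] by blast
    have hs: "\<forall>(q,a)\<in>set (hh n alg x s). answer_of n (fst x, snd x) q = a" using hh_self[of n alg x s] by simp
    have "swx i j (fst e) (snd e) (fst x, snd x) \<in> inputs n" using swsetup.inputs'[OF q(4)] .
    moreover have "\<forall>(q,a)\<in>set (hh n alg x s). answer_of n (swx i j (fst e) (snd e) (fst x, snd x)) q = a"
      using swsetup.consistent'[OF q(4) hs q(1)] q(2,3) by simp
    ultimately show ?thesis using q(5) by simp
  qed
  have inj: "inj_on f (Sigma A W)"
  proof (rule inj_onI)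
    fix a b assume a: "a \<in> Sigma A W" and b: "b \<in> Sigma A W" and fe: "f a = f b"
    obtain x1 e1 where a': "a = (x1,e1)" by (rule prod.exhaust)
    obtain x2 e2 where b': "b = (x2,e2)" by (rule prod.exhaust)
    have h1: "hh n alg (f a) s = hh n alg x1 s" using img[of x1 e1] a a' by (auto intro!: hh_same)
    have h2: "hh n alg (f b) s = hh n alg x2 s" using img[of x2 e2] b b' by (auto intro!: hh_same)
    have hsame: "hh n alg x1 s = hh n alg x2 s" using h1 h2 fe by simp
    then have qsame: "qq n alg x1 s = qq n alg x2 s" by (simp add: qq_def hh_def)
    obtain i j where q1: "ij (qq n alg x1 s) = (i,j)" "swsetup n (fst x1) (snd x1) i j (fst e1) (snd e1)"
      "f (x1,e1) = swx i j (fst e1) (snd e1) (fst x1, snd x1)"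
      using info2[of x1 e1] a a' by blast
    obtain i' j' where q2: "ij (qq n alg x2 s) = (i',j')" "swsetup n (fst x2) (snd x2) i' j' (fst e2) (snd e2)"
      "f (x2,e2) = swx i' j' (fst e2) (snd e2) (fst x2, snd x2)"
      using info2[of x2 e2] b b' by blast
    have ii: "i' = i" "j' = j" using q1(1) q2(1) qsame by auto
    have yi: "f a \<in> inputs n" using img[of x1 e1] a a' by auto
    have pmy: "perfect_matching_L2R2 n (fst (f a))" using inputsD[OF yi] by simp
    have m1: "(i, snd e1) \<in> fst (f a)" "(fst e1, j) \<in> fst (f a)"
      using swsetup.in'[OF q1(2)] q1(3) a' by (simp_all add: swx_def)
    have m2: "(i, snd e2) \<in> fst (f a)" "(fst e2, j) \<in> fst (f a)"
      using swsetup.in'[OF q2(2)] q2(3) b' fe ii by (simp_all add: swx_def)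
    have "snd e1 = snd e2" using pm_row[OF pmy m1(1) m2(1)] .
    moreover have "fst e1 = fst e2" using pm_col[OF pmy m1(2) m2(2)] .
    ultimately have ee: "e1 = e2" by (simp add: prod_eq_iff)
    have "x1 = swx i (snd e1) (fst e1) j (f a)"
      using swsetup.invol[OF q1(2)] q1(3) a' by simp
    moreover have "x2 = swx i (snd e2) (fst e2) j (f a)"
      using swsetup.invol[OF q2(2)] q2(3) b' fe ii by simp
    ultimately show "a = b" using a' b' ee by simp
  qed
  have "card A * ?k \<le> card (inputs n)"
  proof (rule sigma_count[OF finite_inputs])
    show "finite A" using finite_inputs by (simp add: A_def)
    show "\<forall>x\<in>A. ?k \<le> card (W x)" using Wc by blast
    show "inj_on f (Sigma A W)" by (rule inj)
    show "f ` Sigma A W \<subseteq> inputs n" using img by auto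
  qed
  then show ?thesis by (simp add: A_def)
qed

definition cheap :: "nat \<Rightarrow> algorithm \<Rightarrow> input \<Rightarrow> nat \<Rightarrow> bool" where
  "cheap n alg x s = (cheap1 n alg x s \<or> cheap2 n alg x s)"
definition Cnt :: "nat \<Rightarrow> algorithm \<Rightarrow> input \<Rightarrow> nat \<Rightarrow> nat" where
  "Cnt n alg x t = card ({..<t} \<inter> {s. cheap n alg x s})"
definition Eset :: "nat \<Rightarrow> algorithm \<Rightarrow> input \<Rightarrow> nat \<Rightarrow> (nat \<times> nat) set" where
  "Eset n alg x t = {e \<in> R n (hh n alg x t). n div 6 < 2 * cnt1 (hh n alg x t) (Inl (fst e)) \<or>
      n div 6 < 2 * cnt1 (hh n alg x t) (Inr (snd e)) \<or>
      n div 6 < cnt2 (hh n alg x t) (Inl (fst e)) + cnt2 (hh n alg x t) (Inr (snd e))}"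

lemma hh_Suc: "hh n alg x (Suc t) = hh n alg x t @ [(qq n alg x t, answer_of n x (qq n alg x t))]"
  by (simp add: hh_def qq_def Let_def)

lemma Cnt_Suc: "Cnt n alg x (Suc t) = Cnt n alg x t + (if cheap n alg x t then 1 else 0)"
proof -
  have "{..<Suc t} \<inter> {s. cheap n alg x s} = (if cheap n alg x t then insert t ({..<t} \<inter> {s. cheap n alg x s}) else {..<t} \<inter> {s. cheap n alg x s})"
    by (auto simp: less_Suc_eq)
  then show ?thesis by (simp add: Cnt_def)
qed

lemma cnt1_mono: "cnt1 (h @ hs) w \<ge> cnt1 h w" by (simp add: cnt1_def)
lemma cnt2_mono: "cnt2 (h @ hs) w \<ge> cnt2 h w" by (simp add: cnt2_def)

lemma finite_Eset[simp]: "finite (Eset n alg x t)"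
  by (rule finite_subset[of _ "R n (hh n alg x t)"]) (auto simp: Eset_def)

lemma Eset_mono: "Eset n alg x t \<subseteq> Eset n alg x (Suc t)"
proof
  fix e assume e: "e \<in> Eset n alg x t"
  let ?h = "hh n alg x t" and ?h' = "hh n alg x (Suc t)"
  have h': "?h' = ?h @ [(qq n alg x t, answer_of n x (qq n alg x t))]" by (rule hh_Suc)
  have c1: "cnt1 ?h w \<le> cnt1 ?h' w" for w unfolding h' by (rule cnt1_mono)
  have c2: "cnt2 ?h w \<le> cnt2 ?h' w" for w unfolding h' by (rule cnt2_mono)
  have "e \<in> R n ?h'" using e h' by (simp add: Eset_def)
  then show "e \<in> Eset n alg x (Suc t)" using e c1[of "Inl (fst e)"] c1[of "Inr (snd e)"]
      c2[of "Inl (fst e)"] c2[of "Inr (snd e)"] unfolding Eset_def by auto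
qed

lemma run_acc: assumes x: "x \<in> inputs n"
  shows "min (card (R n (hh n alg x t))) (n div 6 + 1) \<le> Cnt n alg x t + card (Eset n alg x t)"
proof (induction t)
  case 0 then show ?case by (simp add: hh_def R_def)
next
  case (Suc t)
  let ?k = "n div 6"
  let ?h = "hh n alg x t" and ?h' = "hh n alg x (Suc t)"
  let ?q = "qq n alg x t" let ?a = "answer_of n x (qq n alg x t)"
  have h': "?h' = ?h @ [(?q, ?a)]" by (rule hh_Suc)
  have R': "R n ?h' = R n ?h \<union> revq n (?q,?a)" using h' by simp
  have Em: "card (Eset n alg x t) \<le> card (Eset n alg x (Suc t))" by (rule card_mono) (simp_all add: Eset_mono)
  have Cm: "Cnt n alg x t \<le> Cnt n alg x (Suc t)" by (simp add: Cnt_Suc)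
  show ?case
  proof (cases "newhit n alg x t")
    case False
    then have "R n ?h' = R n ?h" using R' by (auto simp: newhit_def qq_def hh_def)
    then show ?thesis using Suc.IH Em Cm by simp
  next
    case True
    then obtain e where e: "e \<in> revq n (?q,?a)" "e \<notin> R n ?h" by (auto simp: newhit_def hh_def qq_def)
    have "revq n (?q,?a) = {e}" using revq_le1[of n "(?q,?a)"] e(1) by blast
    then have R'': "R n ?h' = insert e (R n ?h)" using R' by simp
    then have cR: "card (R n ?h') = card (R n ?h) + 1" using e(2) by simp
    show ?thesis
    proof (cases "?k + 1 \<le> card (R n ?h)")
      case True then show ?thesis using Suc.IH Em Cm cR by simp
    next
      case Rsmall: False
      show ?thesis
      proof (cases "cheap n alg x t")
        case True
        then show ?thesis using Suc.IH Em cR by (simp add: Cnt_Suc)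
      next
        case False
        have eE: "e \<in> Eset n alg x (Suc t)"
        proof -
          have c1: "cnt1 ?h w \<le> cnt1 ?h' w" for w unfolding h' by (rule cnt1_mono)
          have c2: "cnt2 ?h w \<le> cnt2 ?h' w" for w unfolding h' by (rule cnt2_mono)
          have eR: "e \<in> R n ?h'" using R'' by simp
          have cases: "(\<exists>p. ?q = Q1 (Inl (fst e)) p) \<or> (\<exists>p. ?q = Q1 (Inr (snd e)) p)
             \<or> ?q = Q2 (Inl (fst e)) (Inr (snd e)) \<or> ?q = Q2 (Inr (snd e)) (Inl (fst e))"
            by (rule revq_cases[OF e(1)])
          have nc1: "\<not> cheap1 n alg x t" and nc2: "\<not> cheap2 n alg x t" using False by (auto simp: cheap_def)
          have "?k < 2 * cnt1 ?h (Inl (fst e)) \<or> ?k < 2 * cnt1 ?h (Inr (snd e)) \<or>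
                ?k < cnt2 ?h (Inl (fst e)) + cnt2 ?h (Inr (snd e))"
          proof -
            { fix v p assume q: "?q = Q1 v p"
              then have "\<not> 2 * cnt1 ?h v \<le> ?k" using nc1 True by (auto simp: cheap1_def) }
            note A1 = this
            { fix u w assume q: "?q = Q2 u w"
              then have "\<not> (cnt2 ?h u + cnt2 ?h w \<le> ?k \<and> card (R n ?h) \<le> ?k)" using nc2 True by (auto simp: cheap2_def)
              then have "\<not> cnt2 ?h u + cnt2 ?h w \<le> ?k" using Rsmall by simp }
            note A2 = this
            show ?thesis using cases A1 A2 by (smt (verit) add.commute not_le)
          qed
          then show ?thesis using eR c1[of "Inl (fst e)"] c1[of "Inr (snd e)"]
            c2[of "Inl (fst e)"] c2[of "Inr (snd e)"] unfolding Eset_def by auto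
        qed
        have "e \<notin> Eset n alg x t" using e(2) by (simp add: Eset_def)
        then have "insert e (Eset n alg x t) \<subseteq> Eset n alg x (Suc t)" using eE Eset_mono by blast
        then have "card (Eset n alg x t) + 1 \<le> card (Eset n alg x (Suc t))"
          using card_mono[OF finite_Eset] \<open>e \<notin> Eset n alg x t\<close> by (metis Suc_eq_plus1 card_insert_disjoint finite_Eset)
        then show ?thesis using Suc.IH Cm cR by simp
      qed
    qed
  qed
qed

lemma sum_bound2:
  fixes c :: "vert \<Rightarrow> nat"
  assumes "finite S" "inj_on g1 S" "inj_on g2 S" "\<forall>e\<in>S. m \<le> c (g1 e) + c (g2 e)"
    "sum c (g1 ` S) \<le> L1" "sum c (g2 ` S) \<le> L2"
  shows "card S * m \<le> L1 + L2"
proof -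
  have "card S * m = (\<Sum>e\<in>S. m)" by simp
  also have "\<dots> \<le> (\<Sum>e\<in>S. c (g1 e) + c (g2 e))" using assms(4) by (intro sum_mono) auto
  also have "\<dots> = (\<Sum>e\<in>S. c (g1 e)) + (\<Sum>e\<in>S. c (g2 e))" by (rule sum.distrib)
  also have "(\<Sum>e\<in>S. c (g1 e)) = sum c (g1 ` S)" using sum.reindex[OF assms(2), of c] by simp
  also have "(\<Sum>e\<in>S. c (g2 e)) = sum c (g2 ` S)" using sum.reindex[OF assms(3), of c] by simp
  finally show ?thesis using assms(5,6) by linarith
qed

lemma R_hh_sub: assumes "x \<in> inputs n" shows "R n (hh n alg x t) \<subseteq> fst x"
  by (rule R_sub[OF assms hh_self])

lemma inj_L: assumes x: "x \<in> inputs n" and S: "S \<subseteq> fst x" shows "inj_on (\<lambda>e. Inl (fst e) :: vert) S"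
proof (rule inj_onI)
  fix e1 e2 :: "nat \<times> nat" assume e: "e1 \<in> S" "e2 \<in> S" "Inl (fst e1) = (Inl (fst e2) :: vert)"
  have pm: "perfect_matching_L2R2 n (fst x)" using inputsD[OF x] by simp
  have i: "e1 \<in> fst x" "e2 \<in> fst x" using e(1,2) S by blast+
  have f: "fst e1 = fst e2" using e(3) by simp
  have m: "(fst e1, snd e1) \<in> fst x" "(fst e1, snd e2) \<in> fst x" using i f by (metis prod.collapse)+
  show "e1 = e2" using pm_row[OF pm m] e(3) by (simp add: prod_eq_iff)
qed

lemma inj_R: assumes x: "x \<in> inputs n" and S: "S \<subseteq> fst x" shows "inj_on (\<lambda>e. Inr (snd e) :: vert) S"
proof (rule inj_onI)
  fix e1 e2 :: "nat \<times> nat" assume e: "e1 \<in> S" "e2 \<in> S" "Inr (snd e1) = (Inr (snd e2) :: vert)"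
  have pm: "perfect_matching_L2R2 n (fst x)" using inputsD[OF x] by simp
  have i: "e1 \<in> fst x" "e2 \<in> fst x" using e(1,2) S by blast+
  have f: "snd e1 = snd e2" using e(3) by simp
  have m: "(fst e1, snd e1) \<in> fst x" "(fst e2, snd e1) \<in> fst x" using i f by (metis prod.collapse)+
  show "e1 = e2" using pm_col[OF pm m] e(3) by (simp add: prod_eq_iff)
qed

lemma E_bound: assumes x: "x \<in> inputs n"
  shows "card (Eset n alg x t) * (n div 6 + 1) \<le> 8 * t"
proof -
  let ?h = "hh n alg x t" let ?k = "n div 6"
  have Rs: "R n ?h \<subseteq> fst x" by (rule R_hh_sub[OF x])
  define E1 where "E1 = {e \<in> R n ?h. ?k < 2 * cnt1 ?h (Inl (fst e))}"
  define E2 where "E2 = {e \<in> R n ?h. ?k < 2 * cnt1 ?h (Inr (snd e))}"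
  define E3 where "E3 = {e \<in> R n ?h. ?k < cnt2 ?h (Inl (fst e)) + cnt2 ?h (Inr (snd e))}"
  have len: "length ?h = t" by (simp add: hh_def)
  have f: "finite E1" "finite E2" "finite E3" by (simp_all add: E1_def E2_def E3_def)
  have s: "E1 \<subseteq> fst x" "E2 \<subseteq> fst x" "E3 \<subseteq> fst x" using Rs by (auto simp: E1_def E2_def E3_def)
  have b1: "card E1 * (?k + 1) \<le> t + t"
    by (rule sum_bound2[OF f(1) inj_L[OF x s(1)] inj_L[OF x s(1)], of _ "cnt1 ?h"])
       (auto simp: E1_def intro: sum_cnt1[where h="?h", unfolded len])
  have b2: "card E2 * (?k + 1) \<le> t + t"
    by (rule sum_bound2[OF f(2) inj_R[OF x s(2)] inj_R[OF x s(2)], of _ "cnt1 ?h"])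
       (auto simp: E2_def intro: sum_cnt1[where h="?h", unfolded len])
  have b3: "card E3 * (?k + 1) \<le> 2 * t + 2 * t"
    by (rule sum_bound2[OF f(3) inj_L[OF x s(3)] inj_R[OF x s(3)], of _ "cnt2 ?h"])
       (auto simp: E3_def intro: sum_cnt2[where h="?h", unfolded len])
  have "Eset n alg x t \<subseteq> E1 \<union> E2 \<union> E3" by (auto simp: Eset_def E1_def E2_def E3_def)
  then have "card (Eset n alg x t) \<le> card (E1 \<union> E2 \<union> E3)" by (intro card_mono) (simp_all add: f)
  also have "\<dots> \<le> card E1 + card E2 + card E3"
    using card_Un_le[of "E1 \<union> E2" E3] card_Un_le[of E1 E2] by linarith
  finally have "card (Eset n alg x t) * (?k + 1) \<le> (card E1 + card E2 + card E3) * (?k + 1)"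
    by (rule mult_le_mono1)
  also have "\<dots> = card E1 * (?k + 1) + card E2 * (?k + 1) + card E3 * (?k + 1)" by (simp add: algebra_simps)
  finally show ?thesis using b1 b2 b3 by linarith
qed

lemma disc_each:
  assumes x: "x \<in> inputs n" and e: "e \<in> discovered n alg x t" "e \<notin> R n (hh n alg x t)"
  shows "card (fst x) \<le> 1 + card (R n (hh n alg x t)) + cnt2 (hh n alg x t) (Inl (fst e)) + cnt2 (hh n alg x t) (Inr (snd e))"
proof -
  let ?h = "hh n alg x t"
  obtain i j where ij: "e = (i,j)" by force
  have eM: "(i,j) \<in> fst x" and all: "\<forall>y\<in>inputs n. consistent n (history n alg x t) y \<longrightarrow> (i,j) \<in> fst y"
    using e(1) ij by (auto simp: discovered_def)
  have pm: "perfect_matching_L2R2 n (fst x)" using inputsD[OF x] by simp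
  have empty: "Wset n ?h (fst x) i j = {}"
  proof (rule ccontr)
    assume "Wset n ?h (fst x) i j \<noteq> {}"
    then obtain e' where e': "e' \<in> fst x" "fst e' \<noteq> i" "e' \<notin> R n ?h" "nobad ?h i j (fst e') (snd e')"
      by (auto simp: Wset_def)
    have xi: "(fst x, snd x) \<in> inputs n" using x by simp
    have ss: "swsetup n (fst x) (snd x) i j (fst e') (snd e')" using xi eM e'(1,2) by (simp add: swsetup_def)
    have hs: "\<forall>(q,a)\<in>set ?h. answer_of n (fst x, snd x) q = a" using hh_self[of n alg x t] by simp
    have y: "swx i j (fst e') (snd e') (fst x, snd x) \<in> inputs n" by (rule swsetup.inputs'[OF ss])
    have "\<forall>(q,a)\<in>set ?h. answer_of n (swx i j (fst e') (snd e') (fst x, snd x)) q = a"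
      using swsetup.consistent'[OF ss hs] e(2) ij e'(3,4) by simp
    then have "consistent n (history n alg x t) (swx i j (fst e') (snd e') (fst x, snd x))"
      by (simp add: consistent_def hh_def)
    then have "(i,j) \<in> fst (swx i j (fst e') (snd e') (fst x, snd x))" using all y by blast
    then show False using swsetup.notin'[OF ss] by (simp add: swx_def)
  qed
  show ?thesis using Wset_card[OF pm eM, of ?h] empty ij by simp
qed

lemma disc_finite: "x \<in> inputs n \<Longrightarrow> finite (discovered n alg x t)"
  by (rule finite_subset[of _ "fst x"]) (auto simp: discovered_def intro: pm_finite[of n] dest: inputsD)

lemma D2_bound: assumes x: "x \<in> inputs n"
  shows "card (discovered n alg x t - R n (hh n alg x t)) * (card (fst x) - 1 - card (R n (hh n alg x t))) \<le> 4 * t"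
proof -
  let ?h = "hh n alg x t"
  let ?D = "discovered n alg x t - R n ?h"
  have len: "length ?h = t" by (simp add: hh_def)
  have fD: "finite ?D" using disc_finite[OF x] by simp
  have sD: "?D \<subseteq> fst x" by (auto simp: discovered_def)
  have "card ?D * (card (fst x) - 1 - card (R n ?h)) \<le> 2 * t + 2 * t"
    by (rule sum_bound2[OF fD inj_L[OF x sD] inj_R[OF x sD], of _ "cnt2 ?h"])
       (use disc_each[OF x] in \<open>fastforce intro: sum_cnt2[where h="?h", unfolded len]\<close>)+
  then show ?thesis by simp
qed

lemma succ_mono: assumes x: "x \<in> inputs n" and s: "succeeds_by n alg x t" and tt: "t \<le> t'"
  shows "succeeds_by n alg x t'"
proof -
  have sub: "set (history n alg x t) \<subseteq> set (history n alg x t')" by (rule history_prefix[OF tt])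
  have "discovered n alg x t \<subseteq> discovered n alg x t'"
  proof
    fix e assume "e \<in> discovered n alg x t"
    then have e1: "e \<in> fst x" and all: "\<forall>y\<in>inputs n. consistent n (history n alg x t) y \<longrightarrow> e \<in> fst y"
      by (simp_all add: discovered_def)
    have "\<forall>y\<in>inputs n. consistent n (history n alg x t') y \<longrightarrow> e \<in> fst y"
    proof (intro ballI impI)
      fix y assume y: "y \<in> inputs n" and c: "consistent n (history n alg x t') y"
      have "consistent n (history n alg x t) y" unfolding consistent_def
      proof (clarify)
        fix q a assume "(q,a) \<in> set (history n alg x t)"
        then have "(q,a) \<in> set (history n alg x t')" using sub by (rule subsetD[rotated])
        then show "answer_of n y q = a" using c unfolding consistent_def by auto
      qed
      then show "e \<in> fst y" using all y by blast
    qed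
    then show "e \<in> discovered n alg x t'" using e1 by (simp add: discovered_def)
  qed
  then have "card (discovered n alg x t) \<le> card (discovered n alg x t')"
    by (rule card_mono[OF disc_finite[OF x]])
  then show ?thesis using s by (simp add: succeeds_by_def)
qed

lemma per_x:
  assumes x: "x \<in> inputs n" and d: "6 dvd n" and k1: "1 \<le> n div 6"
    and T: "40 * T \<le> (n div 6) * (n div 6)" and s: "succeeds_by n alg x T"
  shows "n div 6 \<le> 2 * Cnt n alg x T"
proof -
  let ?k = "n div 6"
  let ?h = "hh n alg x T"
  define N where "N = card (R n ?h)"
  define C where "C = Cnt n alg x T"
  define E where "E = card (Eset n alg x T)"
  define D where "D = card (discovered n alg x T - R n ?h)"
  obtain m where nm: "n = 6 * m" using d by (auto simp: dvd_def)
  have km: "?k = m" using nm by simp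
  have a1: "min N (?k + 1) \<le> C + E" unfolding N_def C_def E_def by (rule run_acc[OF x])
  have a2: "E * (?k + 1) \<le> 8 * T" unfolding E_def by (rule E_bound[OF x])
  have a3: "2 * ?k \<le> N + D"
  proof -
    have "n div 3 \<le> card (discovered n alg x T)" using s by (simp add: succeeds_by_def)
    moreover have "n div 3 = 2 * ?k" using nm by simp
    moreover have "discovered n alg x T \<subseteq> R n ?h \<union> (discovered n alg x T - R n ?h)" by blast
    then have "card (discovered n alg x T) \<le> card (R n ?h \<union> (discovered n alg x T - R n ?h))"
      by (rule card_mono[rotated]) (simp add: disc_finite[OF x])
    moreover have "card (R n ?h \<union> (discovered n alg x T - R n ?h)) \<le> N + D"
      unfolding N_def D_def by (rule card_Un_le)
    ultimately show ?thesis by linarith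
  qed
  have pm: "perfect_matching_L2R2 n (fst x)" using inputsD[OF x] by simp
  have cM: "card (fst x) = 5 * ?k" using pm_card[OF pm] nm km by simp
  have a4: "D * (5 * ?k - 1 - N) \<le> 4 * T" using D2_bound[OF x, of alg T] cM unfolding D_def N_def by simp
  have e5: "5 * E \<le> ?k"
  proof -
    have "(5 * E) * (?k + 1) \<le> 40 * T" using a2 by simp
    also have "\<dots> \<le> ?k * ?k" by (rule T)
    also have "\<dots> \<le> ?k * (?k + 1)" by simp
    finally have "(5 * E) * (?k + 1) \<le> ?k * (?k + 1)" .
    then show ?thesis by (rule mult_right_le_imp_le) simp
  qed
  show ?thesis
  proof (cases "N \<le> ?k")
    case True
    then have mn: "min N (?k + 1) = N" by simp
    have "3 * ?k \<le> 5 * ?k - 1 - N" using True k1 by linarith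
    then have "D * (3 * ?k) \<le> D * (5 * ?k - 1 - N)" by (rule mult_le_mono2)
    then have "(30 * D) * ?k \<le> 40 * T" using a4 by linarith
    also have "\<dots> \<le> ?k * ?k" by (rule T)
    finally have "(30 * D) * ?k \<le> ?k * ?k" .
    then have "30 * D \<le> ?k" by (rule mult_right_le_imp_le) (use k1 in simp)
    then show ?thesis using a1 a3 e5 mn unfolding C_def by linarith
  next
    case False
    then have "min N (?k + 1) = ?k + 1" by simp
    then show ?thesis using a1 e5 unfolding C_def by linarith
  qed
qed

lemma card_inter_sum: assumes "finite A" shows "card (A \<inter> {x. P x}) = (\<Sum>x\<in>A. if P x then 1 else 0 :: nat)"
proof -
  have "card (A \<inter> {x. P x}) = sum (\<lambda>x. 1::nat) (A \<inter> {x. P x})" by (rule card_eq_sum)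
  also have "\<dots> = sum (\<lambda>x. if x \<in> {x. P x} then 1 else 0 :: nat) A" by (rule sum.inter_restrict[OF assms])
  finally show ?thesis by simp
qed

lemma sum_swap_card:
  fixes T :: nat
  assumes "finite I"
  shows "(\<Sum>x\<in>I. card ({..<T} \<inter> {s. P x s})) = (\<Sum>s<T. card (I \<inter> {x. P x s}))"
proof -
  have eq1: "card ({..<T} \<inter> {s. P x s}) = (\<Sum>s<T. if P x s then 1 else 0 :: nat)" for x
    using card_inter_sum[of "{..<T}" "\<lambda>s. P x s"] by simp
  have eq2: "card (I \<inter> {x. P x s}) = (\<Sum>x\<in>I. if P x s then 1 else 0 :: nat)" for s
    using card_inter_sum[OF assms, of "\<lambda>x. P x s"] by simp
  have "(\<Sum>x\<in>I. card ({..<T} \<inter> {s. P x s})) = (\<Sum>x\<in>I. \<Sum>s<T. if P x s then 1 else 0 :: nat)"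
    by (simp only: eq1)
  also have "\<dots> = (\<Sum>s<T. \<Sum>x\<in>I. if P x s then 1 else 0 :: nat)" by (rule sum.swap)
  also have "\<dots> = (\<Sum>s<T. card (I \<inter> {x. P x s}))" by (simp only: eq2)
  finally show ?thesis .
qed

lemma step_cheap: "card (inputs n \<inter> {x. cheap n alg x s}) * (n div 6) \<le> 3 * card (inputs n)"
proof -
  have "inputs n \<inter> {x. cheap n alg x s} \<subseteq> {x \<in> inputs n. cheap1 n alg x s} \<union> {x \<in> inputs n. cheap2 n alg x s}"
    by (auto simp: cheap_def)
  then have "card (inputs n \<inter> {x. cheap n alg x s}) \<le> card ({x \<in> inputs n. cheap1 n alg x s} \<union> {x \<in> inputs n. cheap2 n alg x s})"
    by (rule card_mono[rotated]) (simp add: finite_inputs)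
  also have "\<dots> \<le> card {x \<in> inputs n. cheap1 n alg x s} + card {x \<in> inputs n. cheap2 n alg x s}"
    by (rule card_Un_le)
  finally have "card (inputs n \<inter> {x. cheap n alg x s}) * (n div 6) \<le>
     (card {x \<in> inputs n. cheap1 n alg x s} + card {x \<in> inputs n. cheap2 n alg x s}) * (n div 6)"
    by (rule mult_le_mono1)
  also have "\<dots> = card {x \<in> inputs n. cheap1 n alg x s} * (n div 6) + card {x \<in> inputs n. cheap2 n alg x s} * (n div 6)"
    by (rule add_mult_distrib)
  finally show ?thesis using step1[of n alg s] step2[of n alg s] by linarith
qed

lemma num_ge: assumes x: "x \<in> inputs n" and ex: "\<exists>t. succeeds_by n alg x t" and ns: "\<not> succeeds_by n alg x T"
  shows "T + 1 \<le> num_queries n alg x"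
proof (rule ccontr)
  assume "\<not> T + 1 \<le> num_queries n alg x"
  then have le: "num_queries n alg x \<le> T" by simp
  have "succeeds_by n alg x (num_queries n alg x)" unfolding num_queries_def using ex by (rule LeastI_ex)
  then have "succeeds_by n alg x T" by (rule succ_mono[OF x _ le])
  then show False using ns by simp
qed

theorem mainTheorem12:
  shows "\<exists>c > (0::real). \<exists>N. \<forall>n \<ge> N. 6 dvd n \<longrightarrow>
           (\<forall>alg. (\<forall>x \<in> inputs n. \<exists>t. succeeds_by n alg x t) \<longrightarrow>
                  expected_queries n alg \<ge> c * real n ^ 2)"
proof (rule exI[of _ "1/2000"], intro conjI exI[of _ 6] allI impI)
  show "(0::real) < 1/2000" by simp
  fix n :: nat and alg assume n6: "6 \<le> n" and d: "6 dvd n" and hyp: "\<forall>x \<in> inputs n. \<exists>t. succeeds_by n alg x t"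
  let ?k = "n div 6"
  let ?I = "inputs n"
  obtain m where nm: "n = 6 * m" using d by (auto simp: dvd_def)
  have km: "?k = m" using nm by simp
  have k1: "1 \<le> ?k" using n6 by simp
  define T where "T = ?k * ?k div 40"
  have T40: "40 * T \<le> ?k * ?k" unfolding T_def by simp
  have T40': "?k * ?k < 40 * (T + 1)" unfolding T_def by simp
  have fI: "finite ?I" by (rule finite_inputs)
  have cI: "0 < card ?I" using fI inputs_nonempty[of n] by (simp add: card_gt_0_iff)
  define S where "S = {x \<in> ?I. succeeds_by n alg x T}"
  have SI: "S \<subseteq> ?I" by (auto simp: S_def)
  have fS: "finite S" using fI SI by (rule finite_subset[rotated])
  define Cs where "Cs = (\<Sum>x\<in>?I. Cnt n alg x T)"
  have sw: "Cs = (\<Sum>s<T. card (?I \<inter> {x. cheap n alg x s}))"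
    unfolding Cs_def Cnt_def by (rule sum_swap_card[OF fI])
  have c3: "?k * Cs \<le> 3 * T * card ?I"
  proof -
    have "?k * Cs = (\<Sum>s<T. card (?I \<inter> {x. cheap n alg x s}) * ?k)"
      unfolding sw by (simp add: sum_distrib_left mult.commute)
    also have "\<dots> \<le> (\<Sum>s<T. 3 * card ?I)" by (intro sum_mono) (rule step_cheap)
    also have "\<dots> = 3 * T * card ?I" by simp
    finally show ?thesis .
  qed
  have c4: "card S * ?k \<le> 2 * Cs"
  proof -
    have "card S * ?k = (\<Sum>x\<in>S. ?k)" by simp
    also have "\<dots> \<le> (\<Sum>x\<in>S. 2 * Cnt n alg x T)"
      by (intro sum_mono per_x[OF _ d k1 T40]) (auto simp: S_def)
    also have "\<dots> \<le> (\<Sum>x\<in>?I. 2 * Cnt n alg x T)" by (rule sum_mono2[OF fI SI]) simp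
    also have "\<dots> = 2 * Cs" by (simp add: Cs_def sum_distrib_left)
    finally show ?thesis .
  qed
  have c5: "(40 * card S) * (?k * ?k) \<le> (6 * card ?I) * (?k * ?k)"
  proof -
    have "(40 * card S) * (?k * ?k) = 40 * ((card S * ?k) * ?k)" by (simp add: algebra_simps)
    also have "\<dots> \<le> 40 * ((2 * Cs) * ?k)" using c4 by (intro mult_le_mono2 mult_le_mono1)
    also have "\<dots> = 80 * (?k * Cs)" by (simp add: algebra_simps)
    also have "\<dots> \<le> 80 * (3 * T * card ?I)" using c3 by (rule mult_le_mono2)
    also have "\<dots> = 6 * card ?I * (40 * T)" by (simp add: algebra_simps)
    also have "\<dots> \<le> 6 * card ?I * (?k * ?k)" using T40 by (rule mult_le_mono2)
    finally show ?thesis by simp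
  qed
  have c6: "40 * card S \<le> 6 * card ?I" using c5 by (rule mult_right_le_imp_le) (use k1 in simp)
  have ge: "T + 1 \<le> num_queries n alg x" if "x \<in> ?I - S" for x
    using that hyp num_ge[of x n alg T] by (auto simp: S_def)
  have sum1: "real (card (?I - S)) * real (T + 1) \<le> (\<Sum>x\<in>?I. real (num_queries n alg x))"
  proof -
    have "real (card (?I - S)) * real (T + 1) = (\<Sum>x\<in>?I - S. real (T + 1))" by simp
    also have "\<dots> \<le> (\<Sum>x\<in>?I - S. real (num_queries n alg x))"
    proof (rule sum_mono)
      fix x assume "x \<in> ?I - S"
      then have "T + 1 \<le> num_queries n alg x" by (rule ge)
      then show "real (T + 1) \<le> real (num_queries n alg x)" by (rule of_nat_mono)
    qed
    also have "\<dots> \<le> (\<Sum>x\<in>?I. real (num_queries n alg x))" by (rule sum_mono2[OF fI]) auto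
    finally show ?thesis .
  qed
  have cd: "card (?I - S) = card ?I - card S" by (rule card_Diff_subset[OF fS SI])
  define a where "a = real (card ?I)"
  define b where "b = real (card S)"
  define t where "t = real T"
  define K where "K = real ?k"
  have a0: "0 < a" using cI by (simp add: a_def)
  have ab: "40 * b \<le> 6 * a" using c6 unfolding a_def b_def by linarith
  have bl: "b \<le> a" using card_mono[OF fI SI] by (simp add: a_def b_def)
  have cdr: "real (card (?I - S)) = a - b" using cd card_mono[OF fI SI] by (simp add: a_def b_def of_nat_diff)
  have tK: "K * K \<le> 40 * (t + 1)"
  proof -
    have "real (?k * ?k) \<le> real (40 * (T + 1))" using T40' by linarith
    then show ?thesis by (simp add: K_def t_def)
  qed
  have nK: "real n = 6 * K" using nm km by (simp add: K_def)
  have S1: "(a - b) * (t + 1) \<le> (\<Sum>x\<in>?I. real (num_queries n alg x))" using sum1 cdr by (simp add: t_def add.commute)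
  have t0: "0 \<le> t + 1" by (simp add: t_def)
  have "(34/40) * a * (t + 1) \<le> (a - b) * (t + 1)"
    using ab t0 by (intro mult_right_mono) auto
  moreover have "(34/40) * a * (K * K / 40) \<le> (34/40) * a * (t + 1)"
    using tK a0 by (intro mult_left_mono) auto
  moreover have "(1/2000) * (6 * K) ^ 2 * a \<le> (34/40) * a * (K * K / 40)"
  proof -
    have "0 \<le> K * K * a" using a0 by simp
    then show ?thesis by (simp add: power2_eq_square algebra_simps)
  qed
  ultimately have main: "(1/2000) * (6 * K) ^ 2 * a \<le> (\<Sum>x\<in>?I. real (num_queries n alg x))"
    using S1 by linarith
  show "1/2000 * real n ^ 2 \<le> expected_queries n alg"
    unfolding expected_queries_def nK
    using main a0 by (simp add: a_def pos_le_divide_eq)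
qed

end
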